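(* Let $G=(V,E)$ be a finite simple graph with $V=\{1,\dots,n\}$, $E=\{e_1,\dots,e_m\}$ and $n\times m$ incidence matrix $A$, and assume $G$ is surjective (every connected component of $G$ is non-bipartite). Let $\lambda\in\mathbb{R}_{>0}^n$. The following are equivalent: (i) the matching problem $(G,\lambda)$ is stabilizable; (ii) for every independent set $\mathcal{I}$ of $G$, $\sum_{i\in\mathcal{I}}\lambda_i<\sum_{i\in V(\mathcal{I})}\lambda_i$, where $V(\mathcal{I})=\bigcup_{i\in\mathcal{I}}V_i$; (iii) the equation $A\mu=\lambda$ admits a solution $\mu\in\mathbb{R}_{>0}^m$ (all coordinates strictly positive).
   Context: Graph notation: $V_i$ is the set of neighbours of node $i$, $E_i$ the set of edges incident to $i$; the incidence matrix $A$ has $a_{i,k}=1$ if node $i$ is an endpoint of $e_k$ and $0$ otherwise. An independent set is a non-empty set of pairwise non-adjacent nodes. Matching model: items of class $i\in V$ arrive according to independent Poisson processes of rate $\lambda_i$ (equivalently, the classes $I_0,I_1,\dots$ of successive arriving items are i.i.d. with $P(I_t=i)=\lambda_i/\sum_j\lambda_j$); a class-$i$ item can be matched with a class-$j$ item iff $\{i,j\}\in E$; matched items leave immediately, unmatched items wait. A matching policy consists of a countably infinite state space $\mathcal{S}$, a map $|\cdot|:\mathcal{S}\to\mathbb{N}^n$ giving the number of unmatched items of each class, with a unique state $\varnothing$ such that $|\varnothing|=0$, and a function $\Phi:\mathcal{S}\times V\times(V\cup\{\bot\})\times\mathcal{S}\to[0,1]$, where $\Phi(s,i,j,s')$ is the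 probability that an arriving class-$i$ item finding state $s$ is matched with a class-$j$ item ($j=\bot$: left unmatched) and the new state is $s'$; it is required that $\Phi(s,i,j,s')>0$ only if $j\in\{j'\in V_i:|s|_{j'}\ge1\}\cup\{\bot\}$ and $|s'|=|s|+\mathbf{1}_i$ if $j=\bot$, $|s'|=|s|-\mathbf{1}_j$ otherwise ($\mathbf{1}_i$ the $i$-th unit vector), and that the Markov chain $(S_t)$ of states, started from $S_0=\varnothing$, is irreducible on $\mathcal{S}$. The model is stable if $(S_t)$ is positive recurrent; the problem $(G,\lambda)$ is stabilizable if some policy makes it stable. *)

theory Defs
  imports "HOL-Analysis.Analysis"
begin

definition simple_graph :: "nat \<Rightarrow> nat set set \<Rightarrow> bool" where
  "simple_graph n E \<longleftrightarrow> (\<forall>e\<in>E. \<exists>i j. e = {i, j} \<and> i \<noteq> j \<and> i \<in> {1..n} \<and> j \<in> {1..n})"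

definition nbrs :: "nat set set \<Rightarrow> nat \<Rightarrow> nat set" where
  "nbrs E i = {j. {i, j} \<in> E}"

definition adj :: "nat set set \<Rightarrow> nat \<Rightarrow> nat \<Rightarrow> bool" where
  "adj E i j \<longleftrightarrow> {i, j} \<in> E"

definition component :: "nat set set \<Rightarrow> nat \<Rightarrow> nat set" where
  "component E i = {j. (adj E)\<^sup>*\<^sup>* i j}"

definition bipartite_on :: "nat set set \<Rightarrow> nat set \<Rightarrow> bool" where
  "bipartite_on E C \<longleftrightarrow> (\<exists>c :: nat \<Rightarrow> bool. \<forall>x\<in>C. \<forall>y\<in>C. {x, y} \<in> E \<longrightarrow> c x \<noteq> c y)"

definition surjective_graph :: "nat \<Rightarrow> nat set set \<Rightarrow> bool" where
  "surjective_graph n E \<longleftrightarrow> (\<forall>i\<in>{1..n}. \<not> bipartite_on E (component E i))"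

definition independent_set :: "nat \<Rightarrow> nat set set \<Rightarrow> nat set \<Rightarrow> bool" where
  "independent_set n E I \<longleftrightarrow> I \<noteq> {} \<and> I \<subseteq> {1..n} \<and> (\<forall>i\<in>I. \<forall>j\<in>I. {i, j} \<notin> E)"

definition incidence :: "nat \<Rightarrow> nat set \<Rightarrow> real" where
  "incidence i e = (if i \<in> e then 1 else 0)"

text \<open>taboo P s k x: probability, starting from s, of being at x at time k
  without having visited s at times 1..k.\<close>
fun taboo :: "(nat \<Rightarrow> nat \<Rightarrow> real) \<Rightarrow> nat \<Rightarrow> nat \<Rightarrow> nat \<Rightarrow> real" where
  "taboo P s 0 x = (if x = s then 1 else 0)"
| "taboo P s (Suc k) y = (if y = s then 0 else (\<Sum>\<^sub>\<infinity>x. taboo P s k x * P x y))"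

fun first_return :: "(nat \<Rightarrow> nat \<Rightarrow> real) \<Rightarrow> nat \<Rightarrow> nat \<Rightarrow> real" where
  "first_return P s 0 = 0"
| "first_return P s (Suc k) = (\<Sum>\<^sub>\<infinity>x. taboo P s k x * P x s)"

definition positive_recurrent_state :: "(nat \<Rightarrow> nat \<Rightarrow> real) \<Rightarrow> nat \<Rightarrow> bool" where
  "positive_recurrent_state P s \<longleftrightarrow>
     (first_return P s has_sum 1) UNIV \<and> (\<lambda>k. real k * first_return P s k) summable_on UNIV"

definition irreducible :: "(nat \<Rightarrow> nat \<Rightarrow> real) \<Rightarrow> bool" where
  "irreducible P \<longleftrightarrow> (\<forall>s s'. (\<lambda>x y. P x y > 0)\<^sup>*\<^sup>* s s')"

definition positive_recurrent :: "(nat \<Rightarrow> nat \<Rightarrow> real) \<Rightarrow> bool" where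
  "positive_recurrent P \<longleftrightarrow> (\<forall>s. positive_recurrent_state P s)"

text \<open>State space: nat (countably infinite). sz s k = number of unmatched class-k
  items in state s. Phi s i j s': probability that an arriving class-i item finding
  state s is matched with a class-j item (j = Some j) or left unmatched (j = None),
  the new state being s'.\<close>

definition matching_policy ::
  "nat \<Rightarrow> nat set set \<Rightarrow> (nat \<Rightarrow> nat \<Rightarrow> nat) \<Rightarrow> nat \<Rightarrow>
   (nat \<Rightarrow> nat \<Rightarrow> nat option \<Rightarrow> nat \<Rightarrow> real) \<Rightarrow> bool" where
  "matching_policy n E sz s0 Phi \<longleftrightarrow>
     (\<forall>s k. k \<notin> {1..n} \<longrightarrow> sz s k = 0) \<and>
     (\<forall>s. sz s = (\<lambda>_. 0) \<longleftrightarrow> s = s0) \<and>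
     (\<forall>s i j s'. Phi s i j s' \<ge> 0) \<and>
     (\<forall>s i. i \<in> {1..n} \<longrightarrow>
        ((\<lambda>s'. Phi s i None s' + (\<Sum>j\<in>{1..n}. Phi s i (Some j) s')) has_sum 1) UNIV) \<and>
     (\<forall>s i j s'. i \<in> {1..n} \<longrightarrow> Phi s i j s' > 0 \<longrightarrow>
        (j = None \<and> sz s' = (sz s)(i := sz s i + 1)) \<or>
        (\<exists>j'. j = Some j' \<and> j' \<in> nbrs E i \<and> sz s j' \<ge> 1 \<and> sz s' = (sz s)(j' := sz s j' - 1)))"

text \<open>Transition matrix of the state chain: classes arrive i.i.d. with
  P(I = i) = lam i / (sum of lam).\<close>
definition policy_chain ::
  "nat \<Rightarrow> (nat \<Rightarrow> real) \<Rightarrow> (nat \<Rightarrow> nat \<Rightarrow> nat option \<Rightarrow> nat \<Rightarrow> real) \<Rightarrow> nat \<Rightarrow> nat \<Rightarrow> real" where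
  "policy_chain n lam Phi s s' =
     (\<Sum>i\<in>{1..n}. (lam i / (\<Sum>k\<in>{1..n}. lam k)) *
        (Phi s i None s' + (\<Sum>j\<in>{1..n}. Phi s i (Some j) s')))"

definition stabilizable :: "nat \<Rightarrow> nat set set \<Rightarrow> (nat \<Rightarrow> real) \<Rightarrow> bool" where
  "stabilizable n E lam \<longleftrightarrow>
     (\<exists>sz s0 Phi. matching_policy n E sz s0 Phi \<and>
        irreducible (policy_chain n lam Phi) \<and>
        positive_recurrent (policy_chain n lam Phi))"

end

theory Submission
  imports Defs
begin

lemma has_sum_diff':
  fixes f g :: "'a \<Rightarrow> real"
  assumes "(f has_sum a) A" "(g has_sum b) A"
  shows "((\<lambda>x. f x - g x) has_sum (a - b)) A"
  using has_sum_add[OF assms(1) has_sum_uminus[where f=g and a="-b" and A=A, THEN iffD2]] assms(2) by simp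

lemma has_sum_sum':
  fixes f :: "'i \<Rightarrow> 'a \<Rightarrow> real"
  assumes "finite I" "\<And>i. i \<in> I \<Longrightarrow> (f i has_sum a i) A"
  shows "((\<lambda>x. \<Sum>i\<in>I. f i x) has_sum (\<Sum>i\<in>I. a i)) A"
  using assms
proof (induction I rule: finite_induct)
  case empty then show ?case by simp
next
  case (insert j I)
  then show ?case by (simp add: has_sum_add)
qed

definition stoch :: "(nat \<Rightarrow> nat \<Rightarrow> real) \<Rightarrow> bool" where
  "stoch P \<longleftrightarrow> (\<forall>x y. 0 \<le> P x y) \<and> (\<forall>x. (P x has_sum 1) UNIV)"

lemma fub:
  fixes u h Ph :: "nat \<Rightarrow> real" and P :: "nat \<Rightarrow> nat \<Rightarrow> real"
  assumes P: "\<And>x y. 0 \<le> P x y" and u: "\<And>x. 0 \<le> u x" and h: "\<And>y. 0 \<le> h y"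
    and Ph: "\<And>x. ((\<lambda>y. P x y * h y) has_sum Ph x) UNIV"
    and S: "((\<lambda>x. u x * Ph x) has_sum S) UNIV"
  shows "(\<lambda>x. u x * P x y * h y) summable_on UNIV"
    and "((\<lambda>y. \<Sum>\<^sub>\<infinity>x. u x * P x y * h y) has_sum S) UNIV"
proof -
  define f where "f = (\<lambda>(x::nat, y::nat). u x * P x y * h y)"
  have f1: "((\<lambda>y. f (x, y)) has_sum u x * Ph x) UNIV" for x
    using has_sum_cmult_right[OF Ph[of x], of "u x"] by (simp add: f_def mult.assoc)
  have fs: "f summable_on Sigma UNIV (\<lambda>_. UNIV)"
    by (rule summable_on_SigmaI[OF f1]) (use S in \<open>auto simp: f_def summable_on_def intro!: mult_nonneg_nonneg P u h\<close>)
  have fh: "(f has_sum S) (Sigma UNIV (\<lambda>_. UNIV))"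
    by (rule has_sum_SigmaI[OF f1 S fs])
  have fh2: "((\<lambda>(y,x). f (x,y)) has_sum S) (UNIV \<times> UNIV)"
    using fh has_sum_swap[where f=f and S=S and A=UNIV and B=UNIV] by (simp add: case_prod_beta)
  have fs2: "(\<lambda>(y,x). u x * P x y * h y) summable_on Sigma UNIV (\<lambda>_. UNIV)"
    using fh2 by (auto simp: f_def summable_on_def)
  show sy: "(\<lambda>x. u x * P x y * h y) summable_on UNIV" for y
    using summable_on_SigmaD1[OF fs2, of y] by simp
  show "((\<lambda>y. \<Sum>\<^sub>\<infinity>x. u x * P x y * h y) has_sum S) UNIV"
    apply (rule has_sum_Sigma'[where f="\<lambda>(y,x). f (x,y)" and a=S and A=UNIV and B="\<lambda>_. UNIV"])
    using fh2 sy by (auto simp: f_def)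
qed

lemma stochD: assumes "stoch P" shows "0 \<le> P x y" "(P x has_sum 1) UNIV"
  using assms by (auto simp: stoch_def)

lemma stoch_le1: assumes "stoch P" shows "P x y \<le> 1"
proof -
  have "((\<lambda>z. if z = y then P x y else 0) has_sum P x y) UNIV"
    by (rule has_sum_finite_neutralI[of "{y}"]) auto
  then show ?thesis
    by (rule has_sum_mono[OF _ stochD(2)[OF assms, of x]]) (auto simp: stochD(1)[OF assms])
qed

definition kill :: "(nat \<Rightarrow> nat \<Rightarrow> real) \<Rightarrow> nat \<Rightarrow> (nat \<Rightarrow> real) \<Rightarrow> nat \<Rightarrow> real" where
  "kill P s u y = (if y = s then 0 else (\<Sum>\<^sub>\<infinity>x. u x * P x y))"

lemma taboo_Suc_kill: "taboo P s (Suc k) = kill P s (taboo P s k)"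
  by (auto simp: kill_def)

lemma summable_times_P:
  assumes "stoch P" "u summable_on UNIV" "\<And>x. 0 \<le> u x"
  shows "(\<lambda>x. u x * P x y) summable_on UNIV"
proof (rule summable_on_comparison_test[OF assms(2)])
  fix x
  show "u x * P x y \<le> u x" using mult_left_le[OF stoch_le1[OF assms(1)] assms(3)] by simp
  show "0 \<le> u x * P x y" using assms(3) stochD(1)[OF assms(1)] by simp
qed

lemma kill_nonneg:
  assumes "stoch P" "\<And>x. 0 \<le> u x"
  shows "0 \<le> kill P s u y"
  using assms(2) stochD(1)[OF assms(1)] by (auto simp: kill_def intro!: infsum_nonneg)

lemma kill_step:
  assumes P: "stoch P" and u: "\<And>x. 0 \<le> u x" "u summable_on UNIV" and h: "\<And>y. 0 \<le> h y" "h s = 0"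
    and Ph: "\<And>x. ((\<lambda>y. P x y * h y) has_sum Ph x) UNIV"
    and S: "((\<lambda>x. u x * Ph x) has_sum S) UNIV"
  shows "((\<lambda>y. kill P s u y * h y) has_sum S) UNIV"
proof -
  have F: "((\<lambda>y. \<Sum>\<^sub>\<infinity>x. u x * P x y * h y) has_sum S) UNIV"
    by (rule fub(2)[OF stochD(1)[OF P] u(1) h(1) Ph S])
  have "kill P s u y * h y = (\<Sum>\<^sub>\<infinity>x. u x * P x y * h y)" for y
  proof (cases "y = s")
    case True then show ?thesis using h by (simp add: kill_def)
  next
    case False
    have "(\<Sum>\<^sub>\<infinity>x. u x * P x y * h y) = (\<Sum>\<^sub>\<infinity>x. u x * P x y) * h y"
      by (rule infsum_cmult_left[OF summable_times_P[OF P u(2) u(1)]])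
    then show ?thesis using False by (simp add: kill_def)
  qed
  then show ?thesis using F by simp
qed

lemma kill_mass:
  assumes P: "stoch P" and u: "\<And>x. 0 \<le> u x" "(u has_sum a) UNIV"
  shows "(kill P s u has_sum (a - (\<Sum>\<^sub>\<infinity>x. u x * P x s))) UNIV"
proof -
  have us: "u summable_on UNIV" using u(2) by (auto simp: summable_on_def)
  define h where "h = (\<lambda>y::nat. if y = s then 0 else (1::real))"
  have Ph: "((\<lambda>y. P x y * h y) has_sum (1 - P x s)) UNIV" for x
  proof -
    have "((\<lambda>y. P x y - (if y = s then P x s else 0)) has_sum (1 - P x s)) UNIV"
      by (rule has_sum_diff'[OF stochD(2)[OF P]]) (rule has_sum_finite_neutralI[of "{s}"], auto)
    then show ?thesis by (rule has_sum_cong[THEN iffD1, rotated]) (auto simp: h_def)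
  qed
  have S: "((\<lambda>x. u x * (1 - P x s)) has_sum (a - (\<Sum>\<^sub>\<infinity>x. u x * P x s))) UNIV"
    using has_sum_diff'[OF u(2) has_sum_infsum[OF summable_times_P[OF P us u(1)]]]
    by (simp add: algebra_simps)
  have "((\<lambda>y. kill P s u y * h y) has_sum (a - (\<Sum>\<^sub>\<infinity>x. u x * P x s))) UNIV"
    by (rule kill_step[OF P u(1) us _ _ Ph S]) (auto simp: h_def)
  moreover have "kill P s u y * h y = kill P s u y" for y
    by (auto simp: h_def kill_def)
  ultimately show ?thesis by simp
qed

lemma kill_mono:
  assumes P: "stoch P" and "\<And>x. 0 \<le> u x" "\<And>x. u x \<le> v x" "v summable_on UNIV"
  shows "kill P s u y \<le> kill P s v y"
proof -
  have us: "u summable_on UNIV"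
    by (rule summable_on_comparison_test[OF assms(4)]) (use assms in auto)
  show ?thesis
    unfolding kill_def
    by (auto intro!: infsum_mono summable_times_P[OF P] us assms(4) mult_right_mono stochD[OF P]
        order_trans[OF assms(2) assms(3)] assms(2) assms(3))
qed

lemma kill_lower:
  assumes P: "stoch P" and u: "\<And>x. 0 \<le> u x" "u summable_on UNIV" and "y \<noteq> s"
  shows "u x * P x y \<le> kill P s u y"
proof -
  have "u x * P x y \<le> (\<Sum>\<^sub>\<infinity>z. u z * P z y)"
    using finite_sum_le_infsum[OF summable_times_P[OF P u(2) u(1)], of "{x}"]
    by (auto intro!: mult_nonneg_nonneg u(1) stochD[OF P])
  then show ?thesis using assms(4) by (simp add: kill_def)
qed

lemma kill_iter:
  assumes P: "stoch P" and u: "\<And>x. 0 \<le> u x" "u summable_on UNIV"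
  shows "(\<forall>x. 0 \<le> (kill P s ^^ r) u x) \<and> ((kill P s ^^ r) u) summable_on UNIV
         \<and> infsum ((kill P s ^^ r) u) UNIV \<le> infsum u UNIV"
proof (induction r)
  case 0 then show ?case using u by simp
next
  case (Suc r)
  define v where "v = (kill P s ^^ r) u"
  have v: "\<And>x. 0 \<le> v x" "(v has_sum infsum v UNIV) UNIV" "infsum v UNIV \<le> infsum u UNIV"
    using Suc by (auto simp: v_def)
  have km: "(kill P s v has_sum (infsum v UNIV - (\<Sum>\<^sub>\<infinity>x. v x * P x s))) UNIV"
    by (rule kill_mass[OF P v(1) v(2)])
  have "0 \<le> (\<Sum>\<^sub>\<infinity>x. v x * P x s)"
    using v(1) stochD(1)[OF P] by (auto intro!: infsum_nonneg)
  moreover have e: "(kill P s ^^ Suc r) u = kill P s v" by (simp add: v_def)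
  moreover have "infsum (kill P s v) UNIV = infsum v UNIV - (\<Sum>\<^sub>\<infinity>x. v x * P x s)"
    using km by (rule infsumI)
  moreover have "kill P s v summable_on UNIV" using km by (auto simp: summable_on_def)
  moreover have "\<forall>x. 0 \<le> kill P s v x" using v(1) by (auto intro!: kill_nonneg[OF P])
  ultimately show ?case
    using v(3) unfolding e by (intro conjI) (blast, blast, linarith)
qed

lemma taboo_iter: "taboo P s (k + r) = (kill P s ^^ r) (taboo P s k)"
  by (induction r) (auto simp: taboo_Suc_kill)

lemma taboo_0: "taboo P s 0 = (\<lambda>x. if x = s then 1 else 0)"
  by auto

lemma taboo_0_has_sum: "(taboo P s 0 has_sum 1) UNIV"
  unfolding taboo_0 by (rule has_sum_finite_neutralI[of "{s}"]) auto

lemma taboo_props: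
  assumes P: "stoch P"
  shows "\<And>x. 0 \<le> taboo P s k x" and "taboo P s k summable_on UNIV" and "infsum (taboo P s k) UNIV \<le> 1"
proof -
  have "(\<forall>x. 0 \<le> (kill P s ^^ k) (taboo P s 0) x) \<and> ((kill P s ^^ k) (taboo P s 0)) summable_on UNIV
         \<and> infsum ((kill P s ^^ k) (taboo P s 0)) UNIV \<le> infsum (taboo P s 0) UNIV"
    by (rule kill_iter[OF P]) (use taboo_0_has_sum in \<open>auto simp: summable_on_def\<close>)
  moreover have "infsum (taboo P s 0) UNIV = 1" using taboo_0_has_sum by (rule infsumI)
  moreover have "taboo P s k = (kill P s ^^ k) (taboo P s 0)" using taboo_iter[of P s 0 k] by simp
  ultimately show "\<And>x. 0 \<le> taboo P s k x" "taboo P s k summable_on UNIV" "infsum (taboo P s k) UNIV \<le> 1"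
    by metis+
qed

lemma taboo_at_s: "taboo P s (Suc k) s = 0" by simp

lemma first_return_nonneg:
  assumes P: "stoch P" shows "0 \<le> first_return P s k"
  by (cases k) (auto intro!: infsum_nonneg mult_nonneg_nonneg taboo_props[OF P] stochD[OF P])

lemma taboo_mass_Suc:
  assumes P: "stoch P"
  shows "infsum (taboo P s (Suc k)) UNIV = infsum (taboo P s k) UNIV - first_return P s (Suc k)"
proof -
  have "(kill P s (taboo P s k) has_sum (infsum (taboo P s k) UNIV - (\<Sum>\<^sub>\<infinity>x. taboo P s k x * P x s))) UNIV"
    by (rule kill_mass[OF P taboo_props(1)[OF P] has_sum_infsum[OF taboo_props(2)[OF P]]])
  then show ?thesis unfolding taboo_Suc_kill first_return.simps by (rule infsumI)
qed

lemma taboo_mass_0: "infsum (taboo P s 0) UNIV = 1"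
  using taboo_0_has_sum by (rule infsumI)

lemma path_loss:
  assumes P: "stoch P" and path: "(\<lambda>a b. P a b > 0)\<^sup>*\<^sup>* a s"
  shows "a \<noteq> s \<longrightarrow> (\<exists>r p. p > 0 \<and> (\<forall>u. (\<forall>x. 0 \<le> u x) \<longrightarrow> u summable_on UNIV \<longrightarrow>
            infsum ((kill P s ^^ r) u) UNIV \<le> infsum u UNIV - p * u a))"
  using path
proof (induction rule: converse_rtranclp_induct)
  case base then show ?case by simp
next
  case (step a b)
  show ?case
  proof
    assume "a \<noteq> s"
    show "\<exists>r p. p > 0 \<and> (\<forall>u. (\<forall>x. 0 \<le> u x) \<longrightarrow> u summable_on UNIV \<longrightarrow>
            infsum ((kill P s ^^ r) u) UNIV \<le> infsum u UNIV - p * u a)"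
    proof (cases "b = s")
      case True
      have "infsum ((kill P s ^^ 1) u) UNIV \<le> infsum u UNIV - P a s * u a"
        if u: "\<forall>x. 0 \<le> u x" "u summable_on UNIV" for u
      proof -
        have km: "(kill P s u has_sum (infsum u UNIV - (\<Sum>\<^sub>\<infinity>x. u x * P x s))) UNIV"
          using kill_mass[OF P, of u "infsum u UNIV" s] u by auto
        have "u a * P a s \<le> (\<Sum>\<^sub>\<infinity>x. u x * P x s)"
          using finite_sum_le_infsum[OF summable_times_P[OF P u(2)], of "{a}"] u(1) stochD(1)[OF P]
          by auto
        then show ?thesis using km by (simp add: infsumI mult.commute)
      qed
      then show ?thesis using step(1) True by blast
    next
      case False
      then obtain r p where p: "p > 0" and rp: "\<And>u. (\<forall>x. 0 \<le> u x) \<Longrightarrow> u summable_on UNIV \<Longrightarrow>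
            infsum ((kill P s ^^ r) u) UNIV \<le> infsum u UNIV - p * u b"
        using step(3) by blast
      have "infsum ((kill P s ^^ Suc r) u) UNIV \<le> infsum u UNIV - (p * P a b) * u a"
        if u: "\<forall>x. 0 \<le> u x" "u summable_on UNIV" for u
      proof -
        have ku: "\<forall>x. 0 \<le> kill P s u x" "kill P s u summable_on UNIV"
          "infsum (kill P s u) UNIV \<le> infsum u UNIV"
          using kill_iter[OF P, where u=u and s=s and r=1] u by auto
        have "infsum ((kill P s ^^ Suc r) u) UNIV = infsum ((kill P s ^^ r) (kill P s u)) UNIV"
          by (simp add: funpow_Suc_right del: funpow.simps)
        also have "\<dots> \<le> infsum (kill P s u) UNIV - p * kill P s u b"
          using rp[OF ku(1) ku(2)] .
        also have "\<dots> \<le> infsum u UNIV - p * (u a * P a b)"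
          using ku(3) kill_lower[OF P _ u(2) False, of a] u(1) p
          by (smt (verit) mult_left_mono)
        finally show ?thesis by (simp add: algebra_simps)
      qed
      then show ?thesis using p step(1) by (intro exI[of _ "Suc r"] exI[of _ "p * P a b"]) auto
    qed
  qed
qed

lemma telescope_bound:
  fixes f :: "nat \<Rightarrow> real"
  assumes "\<And>k. 0 \<le> f k" "\<And>k. f k \<le> 1"
  shows "(\<Sum>k<K. f k - f (k + r)) \<le> real r"
proof -
  have "(\<Sum>k<K. f (k + r)) = (\<Sum>k\<in>{r..<K + r}. f k)"
    using sum.shift_bounds_nat_ivl[of f 0 r K] by (simp add: atLeast0LessThan)
  moreover have "(\<Sum>k<K. f k) \<le> (\<Sum>k<r. f k) + (\<Sum>k\<in>{r..<K + r}. f k)"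
  proof -
    have "(\<Sum>k<K. f k) \<le> (\<Sum>k\<in>{..<r} \<union> {r..<K + r}. f k)"
      by (rule sum_mono2) (use assms in auto)
    also have "\<dots> = (\<Sum>k<r. f k) + (\<Sum>k\<in>{r..<K + r}. f k)"
      by (rule sum.union_disjoint) auto
    finally show ?thesis .
  qed
  moreover have "(\<Sum>k<r. f k) \<le> (\<Sum>k<r. 1)"
    by (rule sum_mono) (use assms in auto)
  ultimately show ?thesis by (simp add: sum_subtractf)
qed

lemma visits_bounded:
  assumes P: "stoch P" and irr: "irreducible P" and "a \<noteq> s"
  shows "\<exists>C. \<forall>K. (\<Sum>k<K. taboo P s k a) \<le> C"
proof -
  have path: "(\<lambda>a b. P a b > 0)\<^sup>*\<^sup>* a s" using irr by (auto simp: irreducible_def)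
  obtain r p where p: "p > 0" and rp: "\<And>u. (\<forall>x. 0 \<le> u x) \<Longrightarrow> u summable_on UNIV \<Longrightarrow>
            infsum ((kill P s ^^ r) u) UNIV \<le> infsum u UNIV - p * u a"
    using path_loss[OF P path] assms(3) by blast
  define m where "m k = infsum (taboo P s k) UNIV" for k
  have le: "p * taboo P s k a \<le> m k - m (k + r)" for k
    using rp[of "taboo P s k"] taboo_props[OF P] by (simp add: m_def taboo_iter)
  have "p * (\<Sum>k<K. taboo P s k a) \<le> real r" for K
  proof -
    have "p * (\<Sum>k<K. taboo P s k a) = (\<Sum>k<K. p * taboo P s k a)" by (simp add: sum_distrib_left)
    also have "\<dots> \<le> (\<Sum>k<K. m k - m (k + r))" by (rule sum_mono) (use le in auto)
    also have "\<dots> \<le> real r"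
      by (rule telescope_bound) (auto simp: m_def intro!: infsum_nonneg taboo_props[OF P])
    finally show ?thesis .
  qed
  then have "(\<Sum>k<K. taboo P s k a) \<le> real r / p" for K
    using p by (simp add: field_simps mult.commute)
  then show ?thesis by blast
qed

lemma pr_from_mass:
  assumes P: "stoch P" and B: "\<And>K. (\<Sum>k<K. infsum (taboo P s k) UNIV) \<le> B"
  shows "positive_recurrent_state P s"
proof -
  define m where "m k = infsum (taboo P s k) UNIV" for k
  define fr where "fr = first_return P s"
  have m0: "m 0 = 1" by (simp add: m_def taboo_mass_0)
  have mS: "m (Suc k) = m k - fr (Suc k)" for k by (simp add: m_def fr_def taboo_mass_Suc[OF P])
  have mnn: "0 \<le> m k" for k by (auto simp: m_def intro!: infsum_nonneg taboo_props[OF P])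
  have frnn: "0 \<le> fr k" for k by (simp add: fr_def first_return_nonneg[OF P])
  have fr0: "fr 0 = 0" by (simp add: fr_def)
  have smm: "summable m"
    by (rule summableI_nonneg_bounded[of m B]) (use mnn B in \<open>auto simp: m_def\<close>)
  have m_lim: "m \<longlonglongrightarrow> 0" using summable_LIMSEQ_zero[OF smm] .
  have S1: "(\<Sum>j<Suc K. fr j) = 1 - m K" for K
    by (induction K) (auto simp: fr0 m0 mS)
  have "(\<lambda>K. \<Sum>j<Suc K. fr j) \<longlonglongrightarrow> 1 - 0"
    unfolding S1 by (intro tendsto_intros m_lim)
  then have "(\<lambda>K. \<Sum>j<K. fr j) \<longlonglongrightarrow> 1"
    using LIMSEQ_imp_Suc[of "\<lambda>K. \<Sum>j<K. fr j"] by simp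
  then have "fr sums 1" by (simp add: sums_def)
  then have h1: "(fr has_sum 1) UNIV" by (rule sums_nonneg_imp_has_sum) (rule frnn)
  have S2: "(\<Sum>j<Suc K. real j * fr j) = (\<Sum>j<K. m j) - real K * m K" for K
  proof (induction K)
    case 0 then show ?case by (simp add: fr0)
  next
    case (Suc K)
    have "(\<Sum>j<Suc (Suc K). real j * fr j) = (\<Sum>j<K. m j) - real K * m K + real (Suc K) * fr (Suc K)"
      using Suc by simp
    also have "\<dots> = (\<Sum>j<Suc K. m j) - real (Suc K) * m (Suc K)"
      by (simp add: mS algebra_simps)
    finally show ?case .
  qed
  have "(\<Sum>j<n. real j * fr j) \<le> B" for n
  proof (cases n)
    case 0
    have "m 0 \<le> B" using B[of 1] by (simp add: m_def)
    then show ?thesis using 0 m0 by simp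
  next
    case (Suc K)
    have "(\<Sum>j<n. real j * fr j) \<le> (\<Sum>j<K. m j)" using S2[of K] mnn[of K] Suc by simp
    also have "\<dots> \<le> B" using B[of K] by (simp add: m_def)
    finally show ?thesis .
  qed
  then have "summable (\<lambda>j. real j * fr j)"
    by (intro summableI_nonneg_bounded[of _ B]) (auto intro!: mult_nonneg_nonneg frnn)
  then have "(\<lambda>j. real j * fr j) summable_on UNIV"
    by (rule summable_nonneg_imp_summable_on) (auto intro!: mult_nonneg_nonneg frnn)
  then show ?thesis using h1 by (simp add: positive_recurrent_state_def fr_def)
qed

lemma foster:
  assumes P: "stoch P" and irr: "irreducible P" and V: "\<And>x. 0 \<le> V x" and F: "finite F"
    and PV: "\<And>x. ((\<lambda>y. P x y * V y) has_sum PV x) UNIV"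
    and out: "\<And>x. x \<notin> F \<Longrightarrow> PV x \<le> V x - 1" and inn: "\<And>x. PV x \<le> V x + b" and b: "0 \<le> b"
  shows "positive_recurrent_state P s"
proof -
  define g where "g k = taboo P s k" for k
  define m where "m k = infsum (g k) UNIV" for k
  have gnn: "0 \<le> g k x" for k x by (simp add: g_def taboo_props[OF P])
  have gs: "g k summable_on UNIV" for k by (simp add: g_def taboo_props[OF P])
  have gh: "(g k has_sum m k) UNIV" for k using gs[of k] by (simp add: m_def)
  define hV where "hV y = (if y = s then 0 else V y)" for y
  define PhV where "PhV x = PV x - P x s * V s" for x
  have PhV: "((\<lambda>y. P x y * hV y) has_sum PhV x) UNIV" for x
  proof -
    have "((\<lambda>y. P x y * V y - (if y = s then P x s * V s else 0)) has_sum PhV x) UNIV"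
      unfolding PhV_def
      by (rule has_sum_diff'[OF PV]) (rule has_sum_finite_neutralI[of "{s}"], auto)
    then show ?thesis by (rule has_sum_cong[THEN iffD1, rotated]) (auto simp: hV_def)
  qed
  have PVnn: "0 \<le> PV x" for x
    by (rule has_sum_nonneg[OF PV]) (auto intro!: mult_nonneg_nonneg V stochD[OF P])
  have step: "((\<lambda>y. g (Suc k) y * V y) has_sum (\<Sum>\<^sub>\<infinity>x. g k x * PhV x)) UNIV
              \<and> (\<lambda>x. g k x * PhV x) summable_on UNIV
              \<and> (\<lambda>x. g k x * PV x) summable_on UNIV"
    if W: "(\<lambda>x. g k x * V x) summable_on UNIV" for k
  proof -
    have s1: "(\<lambda>x. g k x * V x + b * g k x) summable_on UNIV"
      by (intro summable_on_add W summable_on_cmult_right gs)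
    have s2: "(\<lambda>x. g k x * PV x) summable_on UNIV"
    proof (rule summable_on_comparison_test[OF s1])
      fix x
      show "0 \<le> g k x * PV x" using gnn PVnn by (simp add: mult_nonneg_nonneg)
      have "g k x * PV x \<le> g k x * (V x + b)" by (rule mult_left_mono[OF inn gnn])
      then show "g k x * PV x \<le> g k x * V x + b * g k x" by (simp add: algebra_simps)
    qed
    have s3: "(\<lambda>x. g k x * P x s * V s) summable_on UNIV"
      by (intro summable_on_cmult_left summable_times_P[OF P gs gnn])
    have s4: "(\<lambda>x. g k x * PhV x) summable_on UNIV"
    proof -
      have "(\<lambda>x. g k x * PV x - g k x * P x s * V s) summable_on UNIV"
        using has_sum_diff'[OF has_sum_infsum[OF s2] has_sum_infsum[OF s3]]
        by (auto simp: summable_on_def)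
      then show ?thesis by (simp add: PhV_def algebra_simps)
    qed
    have "((\<lambda>y. kill P s (g k) y * hV y) has_sum (\<Sum>\<^sub>\<infinity>x. g k x * PhV x)) UNIV"
      by (rule kill_step[OF P gnn gs _ _ PhV has_sum_infsum[OF s4]]) (auto simp: hV_def V)
    moreover have "kill P s (g k) y * hV y = g (Suc k) y * V y" for y
      by (simp add: g_def taboo_Suc_kill[symmetric] hV_def del: taboo.simps)
         (simp add: kill_def)
    ultimately show ?thesis using s2 s4 by simp
  qed
  have Wsum: "(\<lambda>x. g k x * V x) summable_on UNIV" for k
  proof (induction k)
    case 0
    have "((\<lambda>x. g 0 x * V x) has_sum V s) UNIV"
      by (rule has_sum_finite_neutralI[of "{s}"]) (auto simp: g_def)
    then show ?case by (auto simp: summable_on_def)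
  next
    case (Suc k) then show ?case using step[of k] by (auto simp: summable_on_def)
  qed
  define W where "W k = (\<Sum>\<^sub>\<infinity>x. g k x * V x)" for k
  have W0: "W 0 = V s"
  proof -
    have "((\<lambda>x. g 0 x * V x) has_sum V s) UNIV"
      by (rule has_sum_finite_neutralI[of "{s}"]) (auto simp: g_def)
    then show ?thesis by (simp add: W_def infsumI)
  qed
  have Wnn: "0 \<le> W k" for k by (auto simp: W_def intro!: infsum_nonneg mult_nonneg_nonneg gnn V)
  have Wstep: "W (Suc k) \<le> W k - m k + (b + 1) * (\<Sum>x\<in>F. g k x)" for k
  proof -
    from step[OF Wsum[of k]] have h1: "((\<lambda>y. g (Suc k) y * V y) has_sum (\<Sum>\<^sub>\<infinity>x. g k x * PhV x)) UNIV"
      and s4: "(\<lambda>x. g k x * PhV x) summable_on UNIV" by auto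
    have e1: "W (Suc k) = (\<Sum>\<^sub>\<infinity>x. g k x * PhV x)" using h1 by (simp add: W_def infsumI)
    have hF: "((\<lambda>x. if x \<in> F then g k x else 0) has_sum (\<Sum>x\<in>F. g k x)) UNIV"
      by (rule has_sum_finite_neutralI[OF F]) auto
    have hR: "((\<lambda>x. (g k x * V x - g k x) + (b + 1) * (if x \<in> F then g k x else 0)) has_sum
               (W k - m k + (b + 1) * (\<Sum>x\<in>F. g k x))) UNIV"
      by (intro has_sum_add has_sum_diff' has_sum_cmult_right hF gh)
         (simp add: W_def Wsum)
    have "(\<Sum>\<^sub>\<infinity>x. g k x * PhV x) \<le> W k - m k + (b + 1) * (\<Sum>x\<in>F. g k x)"
    proof (rule has_sum_mono[OF has_sum_infsum[OF s4] hR])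
      fix x
      have a: "g k x * PhV x \<le> g k x * PV x"
        using gnn[of k x] stochD(1)[OF P, of x s] V[of s]
        by (simp add: PhV_def algebra_simps mult_nonneg_nonneg)
      have "PV x \<le> V x - 1 + (b + 1) * (if x \<in> F then 1 else 0)"
        using out[of x] inn[of x] by auto
      then have "g k x * PV x \<le> g k x * (V x - 1 + (b + 1) * (if x \<in> F then 1 else 0))"
        by (rule mult_left_mono) (rule gnn)
      then show "g k x * PhV x \<le> (g k x * V x - g k x) + (b + 1) * (if x \<in> F then g k x else 0)"
        using a by (auto simp: algebra_simps)
    qed
    then show ?thesis using e1 by simp
  qed
  have tele: "W K + (\<Sum>k<K. m k) \<le> W 0 + (b + 1) * (\<Sum>k<K. \<Sum>x\<in>F. g k x)" for K
  proof (induction K)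
    case 0 then show ?case by simp
  next
    case (Suc K) then show ?case using Wstep[of K] by (simp add: algebra_simps)
  qed
  have Cex: "\<exists>C. \<forall>K. (\<Sum>k<K. g k x) \<le> C" for x
  proof (cases "x = s")
    case True
    have "(\<Sum>k<K. g k x) \<le> 1" for K
    proof (induction K)
      case 0 then show ?case by simp
    next
      case (Suc K) then show ?case using True by (cases K) (auto simp: g_def)
    qed
    then show ?thesis by blast
  next
    case False then show ?thesis using visits_bounded[OF P irr False] by (simp add: g_def)
  qed
  then obtain C where C: "\<And>x K. (\<Sum>k<K. g k x) \<le> C x" by metis
  have "(\<Sum>k<K. m k) \<le> V s + (b + 1) * (\<Sum>x\<in>F. C x)" for K
  proof -
    have "(\<Sum>k<K. \<Sum>x\<in>F. g k x) = (\<Sum>x\<in>F. \<Sum>k<K. g k x)" by (rule sum.swap)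
    also have "\<dots> \<le> (\<Sum>x\<in>F. C x)" by (rule sum_mono) (rule C)
    finally have "(\<Sum>k<K. \<Sum>x\<in>F. g k x) \<le> (\<Sum>x\<in>F. C x)" .
    then have "(b + 1) * (\<Sum>k<K. \<Sum>x\<in>F. g k x) \<le> (b + 1) * (\<Sum>x\<in>F. C x)"
      using b by (intro mult_left_mono) auto
    then show ?thesis using tele[of K] Wnn[of K] W0 by linarith
  qed
  then show ?thesis by (intro pr_from_mass[OF P]) (auto simp: m_def g_def)
qed

lemma pr_tail:
  assumes P: "stoch P" and pr: "positive_recurrent_state P s" and e: "0 < e"
  shows "\<exists>k\<ge>1. real k * infsum (taboo P s k) UNIV < e"
proof -
  define m where "m k = infsum (taboo P s k) UNIV" for k
  define fr where "fr = first_return P s"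
  have m0: "m 0 = 1" by (simp add: m_def taboo_mass_0)
  have mS: "m (Suc k) = m k - fr (Suc k)" for k by (simp add: m_def fr_def taboo_mass_Suc[OF P])
  have frnn: "0 \<le> fr k" for k by (simp add: fr_def first_return_nonneg[OF P])
  have fr0: "fr 0 = 0" by (simp add: fr_def)
  have S1: "(\<Sum>j<Suc K. fr j) = 1 - m K" for K
    by (induction K) (auto simp: fr0 m0 mS)
  have fs: "fr sums 1" using pr by (auto simp: positive_recurrent_state_def fr_def intro: has_sum_imp_sums)
  have js: "summable (\<lambda>j. real j * fr j)"
    using pr by (auto simp: positive_recurrent_state_def fr_def intro: summable_on_imp_summable)
  have sfr: "summable fr" using fs by (simp add: sums_iff)
  have mt: "m K = (\<Sum>i. fr (i + Suc K))" for K
    using suminf_split_initial_segment[OF sfr, of "Suc K"] fs S1[of K] by (simp add: sums_iff)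
  obtain N where N: "\<And>n. n \<ge> N \<Longrightarrow> norm (\<Sum>i. real (i + n) * fr (i + n)) < e"
    using suminf_exist_split[OF e js] by auto
  define k where "k = max N 1"
  have "real k * m k = (\<Sum>i. real k * fr (i + Suc k))"
    unfolding mt by (rule suminf_mult[symmetric]) (rule summable_ignore_initial_segment[OF sfr])
  also have "\<dots> \<le> (\<Sum>i. real (i + Suc k) * fr (i + Suc k))"
  proof (rule suminf_le)
    show "summable (\<lambda>i. real k * fr (i + Suc k))"
      by (rule summable_mult) (rule summable_ignore_initial_segment[OF sfr])
    show "summable (\<lambda>i. real (i + Suc k) * fr (i + Suc k))"
      using summable_ignore_initial_segment[OF js, of "Suc k"] by simp
    show "real k * fr (i + Suc k) \<le> real (i + Suc k) * fr (i + Suc k)" for i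
      by (rule mult_right_mono) (auto intro: frnn)
  qed
  also have "\<dots> < e"
  proof -
    have "norm (\<Sum>i. real (i + Suc k) * fr (i + Suc k)) < e" using N[of "Suc k"] by (simp add: k_def)
    then show ?thesis by (simp only: real_norm_def abs_less_iff)
  qed
  finally show ?thesis by (intro exI[of _ k]) (auto simp: k_def m_def)
qed

lemma taboo_support:
  fixes t :: "nat \<Rightarrow> nat"
  assumes P: "stoch P" and t0: "t s = 0" and tstep: "\<And>x y. P x y > 0 \<Longrightarrow> t y \<le> t x + 1"
  shows "taboo P s k x \<noteq> 0 \<Longrightarrow> t x \<le> k"
proof (induction k arbitrary: x)
  case 0 then show ?case using t0 by (auto split: if_splits)
next
  case (Suc k)
  then have "x \<noteq> s" and nz: "(\<Sum>\<^sub>\<infinity>z. taboo P s k z * P z x) \<noteq> 0" by (auto split: if_splits)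
  have "\<exists>z. taboo P s k z * P z x \<noteq> 0"
  proof (rule ccontr)
    assume "\<not> ?thesis"
    then have "(\<Sum>\<^sub>\<infinity>z. taboo P s k z * P z x) = 0" by (intro infsum_0) auto
    with nz show False by simp
  qed
  then obtain z where "taboo P s k z * P z x \<noteq> 0" by blast
  then have z1: "taboo P s k z \<noteq> 0" and z2: "P z x > 0"
    using stochD(1)[OF P, of z x] by (auto simp: less_le)
  have "t z \<le> k" by (rule Suc.IH[OF z1])
  moreover have "t x \<le> t z + 1" by (rule tstep[OF z2])
  ultimately show ?case by simp
qed

lemma no_pr_submart:
  fixes t :: "nat \<Rightarrow> nat"
  assumes P: "stoch P" and pr: "positive_recurrent_state P s"
    and f: "\<And>x. 0 \<le> f x" "f s = 0"
    and t0: "t s = 0" and tstep: "\<And>x y. P x y > 0 \<Longrightarrow> t y \<le> t x + 1" and ft: "\<And>x. f x \<le> real (t x)"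
    and Pf: "\<And>x. ((\<lambda>y. P x y * f y) has_sum Pf x) UNIV" and sub: "\<And>x. f x \<le> Pf x" and c: "0 < Pf s"
  shows False
proof -
  define g where "g k = taboo P s k" for k
  define m where "m k = infsum (g k) UNIV" for k
  have gnn: "0 \<le> g k x" for k x by (simp add: g_def taboo_props[OF P])
  have gs: "g k summable_on UNIV" for k by (simp add: g_def taboo_props[OF P])
  have supp: "g k x \<noteq> 0 \<Longrightarrow> t x \<le> k" for k x
    unfolding g_def using taboo_support[of P t s, OF P t0 tstep] by blast
  have Pfle: "Pf x \<le> real (t x) + 1" for x
  proof -
    have "((\<lambda>y. P x y * (real (t x) + 1)) has_sum (real (t x) + 1)) UNIV"
      using has_sum_cmult_left[OF stochD(2)[OF P], of x "real (t x) + 1"] by simp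
    then show ?thesis
    proof (rule has_sum_mono[OF Pf])
      fix y
      show "P x y * f y \<le> P x y * (real (t x) + 1)"
      proof (cases "P x y > 0")
        case True then show ?thesis using tstep[OF True] ft[of y] by (intro mult_left_mono) auto
      next
        case False then have "P x y = 0" using stochD(1)[OF P, of x y] by auto
        then show ?thesis by simp
      qed
    qed
  qed
  have bnd: "g k x * h x \<le> real (k + d) * g k x"
    if "\<And>x. 0 \<le> h x" "\<And>x. h x \<le> real (t x) + real d" for h d k x
  proof (cases "g k x = 0")
    case True then show ?thesis by simp
  next
    case False
    then have "h x \<le> real (k + d)" using supp[OF False] that(2)[of x] by simp
    then have "g k x * h x \<le> g k x * real (k + d)" using gnn[of k x] by (rule mult_left_mono)
    then show ?thesis by (simp add: mult.commute)
  qed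
  have bf: "g k x * f x \<le> real (k + 0) * g k x" for k x
    by (rule bnd) (auto intro: f ft)
  have sf: "(\<lambda>x. g k x * f x) summable_on UNIV" for k
    by (rule summable_on_comparison_test[OF summable_on_cmult_right[OF gs[of k], of "real (k + 0)"]])
       (use bf gnn f in \<open>auto intro!: mult_nonneg_nonneg\<close>)
  have Pfnn: "0 \<le> Pf x" for x using f(1)[of x] sub[of x] by linarith
  have bPf: "g k x * Pf x \<le> real (k + 1) * g k x" for k x
    by (rule bnd) (auto intro: Pfnn Pfle)
  have sPf: "(\<lambda>x. g k x * Pf x) summable_on UNIV" for k
    by (rule summable_on_comparison_test[OF summable_on_cmult_right[OF gs[of k], of "real (k + 1)"]])
       (use bPf gnn Pfnn in \<open>auto intro!: mult_nonneg_nonneg\<close>)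
  define A where "A k = (\<Sum>\<^sub>\<infinity>x. g k x * f x)" for k
  have AS: "A (Suc k) = (\<Sum>\<^sub>\<infinity>x. g k x * Pf x)" for k
  proof -
    have "((\<lambda>y. kill P s (g k) y * f y) has_sum (\<Sum>\<^sub>\<infinity>x. g k x * Pf x)) UNIV"
      by (rule kill_step[OF P gnn gs f Pf has_sum_infsum[OF sPf]])
    then show ?thesis by (simp add: A_def g_def taboo_Suc_kill infsumI)
  qed
  have Amono: "A k \<le> A (Suc k)" for k
  proof -
    have "A k \<le> (\<Sum>\<^sub>\<infinity>x. g k x * Pf x)"
      unfolding A_def by (rule infsum_mono[OF sf sPf]) (auto intro!: mult_left_mono sub gnn)
    then show ?thesis using AS[of k] by simp
  qed
  have A1: "A 1 = Pf s"
  proof -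
    have "((\<lambda>x. g 0 x * Pf x) has_sum Pf s) UNIV"
      by (rule has_sum_finite_neutralI[of "{s}"]) (auto simp: g_def)
    then show ?thesis using AS[of 0] by (simp add: infsumI)
  qed
  have Age: "k \<ge> 1 \<Longrightarrow> Pf s \<le> A k" for k
  proof (induction k)
    case 0 then show ?case by simp
  next
    case (Suc k) then show ?case using Amono[of k] A1 by (cases k) auto
  qed
  have Ale: "A k \<le> real k * m k" for k
  proof -
    have "A k \<le> (\<Sum>\<^sub>\<infinity>x. real (k + 0) * g k x)"
      unfolding A_def
      by (rule infsum_mono[OF sf summable_on_cmult_right[OF gs[of k]]]) (rule bf)
    then show ?thesis by (simp add: m_def infsum_cmult_right[OF gs])
  qed
  obtain k where "k \<ge> 1" "real k * m k < Pf s"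
    using pr_tail[OF P pr c] by (auto simp: m_def g_def)
  then show False using Age[of k] Ale[of k] by linarith
qed


lemma sg_nbrs:
  assumes "simple_graph n E" "j \<in> nbrs E k"
  shows "j \<in> {1..n}" "k \<in> {1..n}" "j \<noteq> k"
proof -
  from assms obtain a b where ab: "{k, j} = {a, b}" "a \<noteq> b" "a \<in> {1..n}" "b \<in> {1..n}"
    unfolding simple_graph_def nbrs_def by blast
  then show "j \<in> {1..n}" "k \<in> {1..n}" by (auto simp: doubleton_eq_iff)
  show "j \<noteq> k" using ab by (auto simp: doubleton_eq_iff)
qed

lemma nbrs_sym: "j \<in> nbrs E k \<longleftrightarrow> k \<in> nbrs E j"
  by (simp add: nbrs_def insert_commute)

lemma sg_finite: "simple_graph n E \<Longrightarrow> finite E"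
proof -
  assume "simple_graph n E"
  then have "E \<subseteq> Pow {1..n}" by (auto simp: simple_graph_def)
  then show "finite E" by (rule finite_subset) simp
qed

lemma sg_edge: "simple_graph n E \<Longrightarrow> e \<in> E \<Longrightarrow> \<exists>i j. e = {i, j} \<and> i \<noteq> j \<and> i \<in> {1..n} \<and> j \<in> {1..n}"
  by (auto simp: simple_graph_def)

lemma inc_sum:
  assumes "finite A" "i \<noteq> j"
  shows "(\<Sum>k\<in>A. incidence k {i, j}) = (if i \<in> A then 1 else 0) + (if j \<in> A then 1 else 0)"
proof -
  have "(\<Sum>k\<in>A. incidence k {i, j}) = (\<Sum>k\<in>A. (if k = i then 1 else 0) + (if k = j then 1 else 0))"
    using assms(2) by (intro sum.cong) (auto simp: incidence_def)
  also have "\<dots> = (if i \<in> A then 1 else 0) + (if j \<in> A then 1 else 0)"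
    using assms(1) by (simp add: sum.distrib sum.delta)
  finally show ?thesis .
qed

lemma lam_sum_edges:
  assumes sg: "simple_graph n E" and A: "A \<subseteq> {1..n}"
    and mu: "\<forall>i\<in>{1..n}. (\<Sum>e\<in>E. incidence i e * \<mu> e) = lam i"
  shows "(\<Sum>i\<in>A. lam i) = (\<Sum>e\<in>E. \<mu> e * (\<Sum>i\<in>A. incidence i e))"
proof -
  have "(\<Sum>i\<in>A. lam i) = (\<Sum>i\<in>A. \<Sum>e\<in>E. incidence i e * \<mu> e)"
    using A mu by (intro sum.cong) auto
  also have "\<dots> = (\<Sum>e\<in>E. \<Sum>i\<in>A. incidence i e * \<mu> e)" by (rule sum.swap)
  also have "\<dots> = (\<Sum>e\<in>E. \<mu> e * (\<Sum>i\<in>A. incidence i e))"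
    by (simp add: sum_distrib_left mult.commute)
  finally show ?thesis .
qed

lemma iii_imp_ii:
  fixes n :: nat and E :: "nat set set" and lam :: "nat \<Rightarrow> real"
  assumes sg: "simple_graph n E" and surj: "surjective_graph n E"
    and mupos: "\<forall>e\<in>E. \<mu> e > 0"
    and mu: "\<forall>i\<in>{1..n}. (\<Sum>e\<in>E. incidence i e * \<mu> e) = lam i"
    and ind: "independent_set n E I"
  shows "(\<Sum>i\<in>I. lam i) < (\<Sum>i\<in>(\<Union>k\<in>I. nbrs E k). lam i)"
proof -
  define VI where "VI = (\<Union>k\<in>I. nbrs E k)"
  have I1: "I \<subseteq> {1..n}" "I \<noteq> {}" and Iind: "\<And>i j. i \<in> I \<Longrightarrow> j \<in> I \<Longrightarrow> {i, j} \<notin> E"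
    using ind by (auto simp: independent_set_def)
  have VI1: "VI \<subseteq> {1..n}" using sg_nbrs(1)[OF sg] by (auto simp: VI_def)
  have fI: "finite I" "finite VI" using I1 VI1 finite_subset by auto
  have disj: "I \<inter> VI = {}" using Iind by (auto simp: VI_def nbrs_def)
  have fE: "finite E" by (rule sg_finite[OF sg])
  define a where "a e = (\<Sum>i\<in>I. incidence i e)" for e
  define b where "b e = (\<Sum>i\<in>VI. incidence i e)" for e
  have ab: "a e \<le> b e \<and> (e \<inter> VI \<noteq> {} \<and> e \<inter> I = {} \<longrightarrow> a e + 1 \<le> b e)" if e: "e \<in> E" for e
  proof -
    obtain i j where ij: "e = {i, j}" "i \<noteq> j" using sg_edge[OF sg e] by blast
    have ae: "a e = (if i \<in> I then 1 else 0) + (if j \<in> I then 1 else 0)"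
      unfolding a_def ij by (rule inc_sum[OF fI(1) ij(2)])
    have be: "b e = (if i \<in> VI then 1 else 0) + (if j \<in> VI then 1 else 0)"
      unfolding b_def ij by (rule inc_sum[OF fI(2) ij(2)])
    have jV: "i \<in> I \<Longrightarrow> j \<in> VI" using e ij by (auto simp: VI_def nbrs_def)
    have iV: "j \<in> I \<Longrightarrow> i \<in> VI" using e ij by (auto simp: VI_def nbrs_def insert_commute)
    have "\<not> (i \<in> I \<and> j \<in> I)" using Iind e ij by auto
    then show ?thesis using ae be jV iV disj ij by auto
  qed
  have "(\<Sum>i\<in>VI. lam i) - (\<Sum>i\<in>I. lam i) = (\<Sum>e\<in>E. \<mu> e * (b e - a e))"
    using lam_sum_edges[OF sg I1(1) mu] lam_sum_edges[OF sg VI1 mu]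
    by (simp add: a_def b_def sum_subtractf[symmetric] algebra_simps)
  moreover have "0 < (\<Sum>e\<in>E. \<mu> e * (b e - a e))"
  proof (cases "\<exists>e\<in>E. e \<inter> VI \<noteq> {} \<and> e \<inter> I = {}")
    case True
    then obtain e where e: "e \<in> E" "e \<inter> VI \<noteq> {}" "e \<inter> I = {}" by blast
    show ?thesis
    proof (rule sum_pos2[OF fE e(1)])
      show "0 < \<mu> e * (b e - a e)" using ab[OF e(1)] e mupos by simp
      show "\<And>x. x \<in> E \<Longrightarrow> 0 \<le> \<mu> x * (b x - a x)"
        using ab mupos by (simp add: less_imp_le)
    qed
  next
    case False
    then have noVI: "\<And>e. e \<in> E \<Longrightarrow> e \<inter> VI \<noteq> {} \<Longrightarrow> e \<inter> I \<noteq> {}" by blast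
    obtain i0 where i0: "i0 \<in> I" using I1 by blast
    have reach: "x \<in> I \<union> VI" if "(adj E)\<^sup>*\<^sup>* i0 x" for x
      using that
    proof (induction rule: rtranclp_induct)
      case base then show ?case using i0 by simp
    next
      case (step x y)
      then have xy: "{x, y} \<in> E" by (simp add: adj_def)
      show ?case
      proof (cases "x \<in> I")
        case True then have "y \<in> VI" using xy by (auto simp: VI_def nbrs_def)
        then show ?thesis by simp
      next
        case False
        then have "x \<in> VI" using step by simp
        then have "{x, y} \<inter> I \<noteq> {}" using noVI[OF xy] by auto
        then show ?thesis using False by auto
      qed
    qed
    have "bipartite_on E (component E i0)"
      unfolding bipartite_on_def
    proof (intro exI[of _ "\<lambda>x. x \<in> I"] ballI impI)
      fix x y assume x: "x \<in> component E i0" and y: "y \<in> component E i0" and xy: "{x, y} \<in> E"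
      have xs: "x \<in> I \<union> VI" "y \<in> I \<union> VI" using reach x y by (auto simp: component_def)
      show "(x \<in> I) \<noteq> (y \<in> I)"
      proof
        assume eq: "(x \<in> I) = (y \<in> I)"
        show False
        proof (cases "x \<in> I")
          case True then show False using eq Iind xy by auto
        next
          case False
          then have "x \<in> VI" "y \<notin> I" using xs eq by auto
          then show False using noVI[OF xy] False by auto
        qed
      qed
    qed
    moreover have "i0 \<in> {1..n}" using i0 I1 by auto
    ultimately show ?thesis using surj by (auto simp: surjective_graph_def)
  qed
  ultimately show ?thesis by (simp add: VI_def)
qed

lemma sum_real_upd:
  fixes h :: "nat \<Rightarrow> nat"
  assumes "finite A"
  shows "(\<Sum>k\<in>A. real ((h(j := v)) k)) = (\<Sum>k\<in>A. real (h k)) + (if j \<in> A then real v - real (h j) else 0)"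
proof (cases "j \<in> A")
  case True
  have "(\<Sum>k\<in>A. real ((h(j := v)) k)) = real v + (\<Sum>k\<in>A - {j}. real ((h(j := v)) k))"
    using sum.remove[OF assms True, of "\<lambda>k. real ((h(j := v)) k)"] by simp
  also have "(\<Sum>k\<in>A - {j}. real ((h(j := v)) k)) = (\<Sum>k\<in>A - {j}. real (h k))"
    by (rule sum.cong) auto
  also have "(\<Sum>k\<in>A. real (h k)) = real (h j) + (\<Sum>k\<in>A - {j}. real (h k))"
    using sum.remove[OF assms True] by simp
  ultimately show ?thesis using True by simp
next
  case False
  then show ?thesis by (auto intro!: sum.cong)
qed

lemma sum_pos_exists:
  fixes g :: "nat \<Rightarrow> real"
  assumes "0 < (\<Sum>i\<in>A. g i)"
  shows "\<exists>i\<in>A. 0 < g i"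
proof (rule ccontr)
  assume "\<not> ?thesis"
  then have "(\<Sum>i\<in>A. g i) \<le> 0" by (intro sum_nonpos) auto
  with assms show False by simp
qed

lemma mp_trans:
  assumes "matching_policy n E sz s0 Phi" "i \<in> {1..n}" "0 < Phi s i j s'"
  shows "(j = None \<and> sz s' = (sz s)(i := sz s i + 1)) \<or>
        (\<exists>j'. j = Some j' \<and> j' \<in> nbrs E i \<and> sz s j' \<ge> 1 \<and> sz s' = (sz s)(j' := sz s j' - 1))"
  using assms unfolding matching_policy_def by blast

lemma necessity:
  fixes n :: nat and E :: "nat set set" and lam :: "nat \<Rightarrow> real"
  assumes sg: "simple_graph n E" and lam: "\<forall>i\<in>{1..n}. lam i > 0"
    and mp: "matching_policy n E sz s0 Phi" and pr: "positive_recurrent (policy_chain n lam Phi)"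
    and ind: "independent_set n E I"
    and viol: "(\<Sum>i\<in>(\<Union>k\<in>I. nbrs E k). lam i) \<le> (\<Sum>i\<in>I. lam i)"
  shows False
proof -
  define L where "L = (\<Sum>k\<in>{1..n}. lam k)"
  define c where "c i = lam i / L" for i
  define r where "r s i y = Phi s i None y + (\<Sum>j\<in>{1..n}. Phi s i (Some j) y)" for s i y
  define P where "P = policy_chain n lam Phi"
  define VI where "VI = (\<Union>k\<in>I. nbrs E k)"
  have I1: "I \<subseteq> {1..n}" "I \<noteq> {}" and Iind: "\<And>i j. i \<in> I \<Longrightarrow> j \<in> I \<Longrightarrow> {i, j} \<notin> E"
    using ind by (auto simp: independent_set_def)
  have VI1: "VI \<subseteq> {1..n}" using sg_nbrs(1)[OF sg] by (auto simp: VI_def)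
  have fI: "finite I" "finite VI" using I1 VI1 finite_subset by auto
  have disj: "I \<inter> VI = {}"
    using Iind by (auto simp: VI_def nbrs_def)
  have nVI: "i \<in> {1..n} \<Longrightarrow> i \<notin> VI \<Longrightarrow> j \<in> nbrs E i \<Longrightarrow> j \<notin> I" for i j
    using nbrs_sym by (auto simp: VI_def)
  have IVI: "i \<in> I \<Longrightarrow> j \<in> nbrs E i \<Longrightarrow> j \<in> VI" for i j by (auto simp: VI_def)
  have Lpos: "0 < L" unfolding L_def
    using I1 lam by (intro sum_pos) auto
  have cpos: "i \<in> {1..n} \<Longrightarrow> 0 < c i" for i using lam Lpos by (simp add: c_def)
  have cnn: "i \<in> {1..n} \<Longrightarrow> 0 \<le> c i" for i using cpos[of i] by simp
  have csum: "(\<Sum>i\<in>{1..n}. c i) = 1"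
    using Lpos by (simp add: c_def L_def sum_divide_distrib[symmetric])
  have Phinn: "0 \<le> Phi s i j y" for s i j y using mp by (simp add: matching_policy_def)
  have rnn: "0 \<le> r s i y" for s i y by (simp add: r_def Phinn sum_nonneg add_nonneg_nonneg)
  have rh: "i \<in> {1..n} \<Longrightarrow> (r s i has_sum 1) UNIV" for s i
    using mp unfolding matching_policy_def r_def by blast
  have Pdef: "P s y = (\<Sum>i\<in>{1..n}. c i * r s i y)" for s y
    by (simp add: P_def policy_chain_def c_def r_def L_def)
  have stP: "stoch P"
  proof -
    have "0 \<le> P s y" for s y unfolding Pdef
    proof (rule sum_nonneg)
      fix i assume i: "i \<in> {1..n}"
      show "0 \<le> c i * r s i y" using less_imp_le[OF cpos[OF i]] rnn[of s i y] by (rule mult_nonneg_nonneg)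
    qed
    moreover have "(P s has_sum 1) UNIV" for s
    proof -
      have "((\<lambda>y. \<Sum>i\<in>{1..n}. c i * r s i y) has_sum (\<Sum>i\<in>{1..n}. c i * 1)) UNIV"
        by (intro has_sum_sum' has_sum_cmult_right rh) auto
      then show ?thesis using csum by (simp add: Pdef[abs_def])
    qed
    ultimately show ?thesis by (simp add: stoch_def)
  qed
  have move: "sz y = (sz s)(i := sz s i + 1) \<or>
      (\<exists>j'. j' \<in> nbrs E i \<and> sz s j' \<ge> 1 \<and> sz y = (sz s)(j' := sz s j' - 1))"
    if i: "i \<in> {1..n}" and ry: "0 < r s i y" for s i y
  proof -
    have "0 < Phi s i None y \<or> (\<exists>j\<in>{1..n}. 0 < Phi s i (Some j) y)"
    proof (rule ccontr)
      assume "\<not> ?thesis"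
      then have "Phi s i None y \<le> 0" "(\<Sum>j\<in>{1..n}. Phi s i (Some j) y) \<le> 0"
        by (auto intro!: sum_nonpos simp: not_less)
      with ry show False by (simp add: r_def)
    qed
    then obtain j where "0 < Phi s i j y" by blast
    from mp_trans[OF mp i this] show ?thesis by blast
  qed
  define X where "X s = (\<Sum>k\<in>I. real (sz s k)) - (\<Sum>k\<in>VI. real (sz s k))" for s
  define t where "t s = (\<Sum>k\<in>{1..n}. sz s k)" for s
  define f where "f s = max 0 (X s)" for s
  define d where "d i = (if i \<in> I then 1 else if i \<in> VI then -1 else (0::real))" for i
  have szI: "sz s k = 0" if "k \<notin> {1..n}" for s k using mp that by (simp add: matching_policy_def)
  have step: "X s + d i \<le> X y \<and> t y \<le> t s + 1"
    if i: "i \<in> {1..n}" and ry: "0 < r s i y" for s i y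
    using move[OF i ry]
  proof
    assume a: "sz y = (sz s)(i := sz s i + 1)"
    have "X y = X s + (if i \<in> I then 1 else 0) - (if i \<in> VI then 1 else 0)"
      unfolding X_def a sum_real_upd[OF fI(1)] sum_real_upd[OF fI(2)] by simp
    moreover have "t y = t s + 1"
    proof -
      have "real (t y) = real (t s) + 1"
        unfolding t_def a of_nat_sum using sum_real_upd[of "{1..n}" "sz s" i "sz s i + 1"] i by simp
      then show ?thesis by (metis of_nat_1 of_nat_add of_nat_eq_iff)
    qed
    ultimately show ?thesis using disj by (auto simp: d_def)
  next
    assume "\<exists>j'. j' \<in> nbrs E i \<and> sz s j' \<ge> 1 \<and> sz y = (sz s)(j' := sz s j' - 1)"
    then obtain j where j: "j \<in> nbrs E i" "sz s j \<ge> 1" and a: "sz y = (sz s)(j := sz s j - 1)" by blast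
    have X: "X y = X s - (if j \<in> I then 1 else 0) + (if j \<in> VI then 1 else 0)"
      unfolding X_def a sum_real_upd[OF fI(1)] sum_real_upd[OF fI(2)] using j(2) by (simp add: of_nat_diff)
    have "t y \<le> t s" unfolding t_def a by (intro sum_mono) auto
    moreover have "X s + d i \<le> X y"
    proof -
      consider "i \<in> I" | "i \<notin> I" "i \<in> VI" | "i \<notin> I" "i \<notin> VI" by blast
      then show ?thesis
      proof cases
        case 1 then have "j \<in> VI" "j \<notin> I" using IVI[OF 1 j(1)] disj by auto
        then show ?thesis using X 1 by (simp add: d_def)
      next
        case 2 then show ?thesis using X by (simp add: d_def)
      next
        case 3 then have "j \<notin> I" using nVI[OF i _ j(1)] by auto
        then show ?thesis using X 3 by (simp add: d_def)
      qed
    qed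
    ultimately show ?thesis by simp
  qed
  have fnn: "0 \<le> f s" for s by (simp add: f_def)
  have sz0: "sz s0 = (\<lambda>_. 0)" using mp by (simp add: matching_policy_def)
  have X0: "X s0 = 0" by (simp add: X_def sz0)
  have f0: "f s0 = 0" by (simp add: f_def X0)
  have t0: "t s0 = 0" by (simp add: t_def sz0)
  have ft: "f s \<le> real (t s)" for s
  proof -
    have "X s \<le> (\<Sum>k\<in>I. real (sz s k))" unfolding X_def by (simp add: sum_nonneg)
    also have "\<dots> \<le> (\<Sum>k\<in>{1..n}. real (sz s k))" by (rule sum_mono2) (use I1 in auto)
    finally show ?thesis by (simp add: f_def t_def sum_nonneg)
  qed
  have tstep: "t y \<le> t x + 1" if Pxy: "0 < P x y" for x y
  proof -
    have "\<exists>i\<in>{1..n}. 0 < c i * r x i y"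
      by (rule sum_pos_exists) (use Pxy in \<open>simp add: Pdef\<close>)
    then obtain i where i: "i \<in> {1..n}" "0 < c i * r x i y" by blast
    then have "0 < r x i y" using cpos[OF i(1)] by (simp add: zero_less_mult_iff)
    then show ?thesis using step[OF i(1)] by blast
  qed
  define R where "R s i = (\<Sum>\<^sub>\<infinity>y. r s i y * f y)" for s i
  have rf_sum: "(\<lambda>y. r s i y * f y) summable_on UNIV" if i: "i \<in> {1..n}" for s i
  proof (rule summable_on_comparison_test[OF summable_on_cmult_left[OF has_sum_imp_summable[OF rh[OF i]]]])
    fix y
    show "0 \<le> r s i y * f y" using rnn fnn by (simp add: mult_nonneg_nonneg)
    show "r s i y * f y \<le> r s i y * (real (t s) + 1)"
    proof (cases "0 < r s i y")
      case True
      then have "f y \<le> real (t s) + 1" using step[OF i True] ft[of y] by linarith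
      then show ?thesis using rnn by (intro mult_left_mono) auto
    next
      case False then have "r s i y = 0" using rnn[of s i y] by simp
      then show ?thesis by simp
    qed
  qed
  have Rge: "max 0 (X s + d i) \<le> R s i" if i: "i \<in> {1..n}" for s i
  proof -
    have "((\<lambda>y. r s i y * max 0 (X s + d i)) has_sum max 0 (X s + d i)) UNIV"
      using has_sum_cmult_left[OF rh[OF i], of s "max 0 (X s + d i)"] by simp
    then show ?thesis unfolding R_def
    proof (rule has_sum_mono[OF _ has_sum_infsum[OF rf_sum[OF i]]])
      fix y
      show "r s i y * max 0 (X s + d i) \<le> r s i y * f y"
      proof (cases "0 < r s i y")
        case True
        then have "max 0 (X s + d i) \<le> f y" using step[OF i True] unfolding f_def by linarith
        then show ?thesis using rnn by (intro mult_left_mono) auto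
      next
        case False then have "r s i y = 0" using rnn[of s i y] by simp
        then show ?thesis by simp
      qed
    qed
  qed
  define Pf where "Pf s = (\<Sum>i\<in>{1..n}. c i * R s i)" for s
  have Pfh: "((\<lambda>y. P s y * f y) has_sum Pf s) UNIV" for s
  proof -
    have "((\<lambda>y. \<Sum>i\<in>{1..n}. c i * (r s i y * f y)) has_sum Pf s) UNIV"
      unfolding Pf_def R_def
      by (intro has_sum_sum' has_sum_cmult_right has_sum_infsum rf_sum) auto
    then show ?thesis by (simp add: Pdef sum_distrib_right mult.assoc)
  qed
  have dsum: "0 \<le> (\<Sum>i\<in>{1..n}. c i * d i)"
  proof -
    have "(\<Sum>i\<in>{1..n}. c i * d i) = (\<Sum>i\<in>{1..n}. (if i \<in> I then c i else 0)) - (\<Sum>i\<in>{1..n}. (if i \<in> VI then c i else 0))"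
      using disj by (auto simp: d_def sum_subtractf[symmetric] intro!: sum.cong)
    also have "\<dots> = (\<Sum>i\<in>I. c i) - (\<Sum>i\<in>VI. c i)"
    proof -
      have "I \<inter> {1..n} = I" "VI \<inter> {1..n} = VI" using I1 VI1 by auto
      then show ?thesis by (simp add: sum.inter_restrict[symmetric] Int_commute)
    qed
    also have "\<dots> = ((\<Sum>i\<in>I. lam i) - (\<Sum>i\<in>VI. lam i)) / L"
      by (simp add: c_def sum_divide_distrib[symmetric] diff_divide_distrib)
    finally show ?thesis using viol Lpos by (simp add: VI_def)
  qed
  have sub: "f s \<le> Pf s" for s
  proof -
    have "(\<Sum>i\<in>{1..n}. c i * max 0 (X s + d i)) \<le> Pf s"
      unfolding Pf_def using cnn Rge by (intro sum_mono mult_left_mono) auto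
    moreover have "X s \<le> (\<Sum>i\<in>{1..n}. c i * max 0 (X s + d i))"
    proof -
      have "X s \<le> X s + (\<Sum>i\<in>{1..n}. c i * d i)" using dsum by simp
      also have "\<dots> = (\<Sum>i\<in>{1..n}. c i * (X s + d i))"
      proof -
        have "(\<Sum>i\<in>{1..n}. c i * (X s + d i)) = X s * (\<Sum>i\<in>{1..n}. c i) + (\<Sum>i\<in>{1..n}. c i * d i)"
          by (simp add: algebra_simps sum.distrib sum_distrib_left)
        then show ?thesis using csum by simp
      qed
      also have "\<dots> \<le> (\<Sum>i\<in>{1..n}. c i * max 0 (X s + d i))"
        using cnn by (intro sum_mono mult_left_mono) auto
      finally show ?thesis .
    qed
    moreover have "0 \<le> (\<Sum>i\<in>{1..n}. c i * max 0 (X s + d i))"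
      using cnn by (intro sum_nonneg mult_nonneg_nonneg) auto
    ultimately show ?thesis by (simp add: f_def)
  qed
  have c0: "0 < Pf s0"
  proof -
    have "(\<Sum>i\<in>I. c i) = (\<Sum>i\<in>I. c i * max 0 (X s0 + d i))"
      by (rule sum.cong) (auto simp: X0 d_def)
    also have "\<dots> \<le> (\<Sum>i\<in>{1..n}. c i * max 0 (X s0 + d i))"
      using I1 cnn by (intro sum_mono2) auto
    also have "\<dots> \<le> Pf s0"
      unfolding Pf_def using cnn Rge by (intro sum_mono mult_left_mono) auto
    finally have "(\<Sum>i\<in>I. c i) \<le> Pf s0" .
    moreover have "0 < (\<Sum>i\<in>I. c i)" using I1 fI cpos by (intro sum_pos) auto
    ultimately show ?thesis by simp
  qed
  have prs: "positive_recurrent_state P s0" using pr by (simp add: P_def positive_recurrent_def)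
  show False
    by (rule no_pr_submart[OF stP prs fnn f0 t0 tstep ft Pfh sub c0])
qed


definition Rset :: "nat \<Rightarrow> nat set set \<Rightarrow> (nat \<Rightarrow> nat) set" where
  "Rset n E = {x. (\<forall>k. k \<notin> {1..n} \<longrightarrow> x k = 0) \<and> (\<forall>i j. 1 \<le> x i \<longrightarrow> 1 \<le> x j \<longrightarrow> {i, j} \<notin> E)}"

definition dec :: "nat \<Rightarrow> nat set set \<Rightarrow> nat \<Rightarrow> (nat \<Rightarrow> nat)" where
  "dec n E = from_nat_into (Rset n E)"

definition enc :: "nat \<Rightarrow> nat set set \<Rightarrow> (nat \<Rightarrow> nat) \<Rightarrow> nat" where
  "enc n E = to_nat_on (Rset n E)"

definition Mx :: "nat set set \<Rightarrow> (nat \<Rightarrow> nat) \<Rightarrow> nat \<Rightarrow> nat" where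
  "Mx E x i = Max (insert 0 (x ` nbrs E i))"

definition jst :: "nat set set \<Rightarrow> (nat \<Rightarrow> nat) \<Rightarrow> nat \<Rightarrow> nat" where
  "jst E x i = (SOME j. j \<in> nbrs E i \<and> x j = Mx E x i)"

definition newx :: "nat set set \<Rightarrow> (nat \<Rightarrow> nat) \<Rightarrow> nat \<Rightarrow> (nat \<Rightarrow> nat)" where
  "newx E x i = (if Mx E x i = 0 then x(i := x i + 1) else x(jst E x i := x (jst E x i) - 1))"

definition act :: "nat \<Rightarrow> nat set set \<Rightarrow> nat \<Rightarrow> nat \<Rightarrow> nat option \<times> nat" where
  "act n E s i = (if Mx E (dec n E s) i = 0 then None else Some (jst E (dec n E s) i),
                  enc n E (newx E (dec n E s) i))"

definition mlPhi :: "nat \<Rightarrow> nat set set \<Rightarrow> nat \<Rightarrow> nat \<Rightarrow> nat option \<Rightarrow> nat \<Rightarrow> real" where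
  "mlPhi n E s i j s' = (if (j, s') = act n E s i then 1 else 0)"

lemma Rset_countable: "countable (Rset n E)"
proof (rule countable_image_inj_on)
  show "countable ((\<lambda>x. map x [0..<Suc n]) ` Rset n E)" by (rule countable_subset[of _ UNIV]) auto
  show "inj_on (\<lambda>x. map x [0..<Suc n]) (Rset n E)"
  proof (rule inj_onI)
    fix x y assume x: "x \<in> Rset n E" and y: "y \<in> Rset n E" and eq: "map x [0..<Suc n] = map y [0..<Suc n]"
    show "x = y"
    proof
      fix k
      show "x k = y k"
      proof (cases "k \<in> {1..n}")
        case True
        then have "k < Suc n" by auto
        then have "k \<in> set [0..<Suc n]" by (simp only: set_upt atLeastLessThan_iff) simp
        moreover have "\<forall>z\<in>set [0..<Suc n]. x z = y z" using eq by (simp only: map_eq_conv)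
        ultimately show ?thesis by blast
      next
        case False then show ?thesis using x y by (simp add: Rset_def)
      qed
    qed
  qed
qed

lemma Rset_infinite:
  assumes "n \<ge> 1" "simple_graph n E"
  shows "infinite (Rset n E)"
proof -
  define f where "f m = (\<lambda>k::nat. if k = 1 then m else (0::nat))" for m
  have "inj f"
  proof (rule injI)
    fix a b assume "f a = f b"
    then have "f a 1 = f b 1" by simp
    then show "a = b" by (simp add: f_def)
  qed
  then have "infinite (range f)" by (rule range_inj_infinite)
  moreover have "range f \<subseteq> Rset n E"
  proof
    fix x assume "x \<in> range f"
    then obtain m where m: "x = f m" by blast
    have "{1, 1} \<notin> E" using sg_edge[OF assms(2)] by (force simp: doubleton_eq_iff)
    then show "x \<in> Rset n E" using assms(1) by (auto simp: Rset_def m f_def split: if_splits)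
  qed
  ultimately show ?thesis using infinite_super by blast
qed

lemma zero_in_Rset': "(\<lambda>_. 0) \<in> Rset n E" by (simp add: Rset_def)

lemma dec_in: "dec n E s \<in> Rset n E"
  unfolding dec_def by (rule from_nat_into) (use zero_in_Rset' in auto)

lemma dec_enc: "x \<in> Rset n E \<Longrightarrow> dec n E (enc n E x) = x"
  by (simp add: dec_def enc_def Rset_countable)

lemma enc_dec: "n \<ge> 1 \<Longrightarrow> simple_graph n E \<Longrightarrow> enc n E (dec n E s) = s"
  by (simp add: dec_def enc_def Rset_countable Rset_infinite)

lemma zero_in_Rset: "(\<lambda>_. 0) \<in> Rset n E" by (simp add: Rset_def)

lemma finite_nbrs: "simple_graph n E \<Longrightarrow> finite (nbrs E i)"
proof -
  assume sg: "simple_graph n E"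
  have "nbrs E i \<subseteq> {1..n}" using sg_nbrs(1)[OF sg] by blast
  then show ?thesis by (rule finite_subset) simp
qed

lemma Mx_ge: "simple_graph n E \<Longrightarrow> j \<in> nbrs E i \<Longrightarrow> x j \<le> Mx E x i"
  unfolding Mx_def by (rule Max_ge) (auto simp: finite_nbrs)

lemma Mx_in: "simple_graph n E \<Longrightarrow> Mx E x i \<in> insert 0 (x ` nbrs E i)"
  unfolding Mx_def by (rule Max_in) (auto simp: finite_nbrs)

lemma Mx_zero: "simple_graph n E \<Longrightarrow> Mx E x i = 0 \<longleftrightarrow> (\<forall>j\<in>nbrs E i. x j = 0)"
proof
  assume sg: "simple_graph n E" and "Mx E x i = 0"
  then show "\<forall>j\<in>nbrs E i. x j = 0" using Mx_ge[OF sg, of _ i x] by fastforce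
next
  assume sg: "simple_graph n E" and z: "\<forall>j\<in>nbrs E i. x j = 0"
  show "Mx E x i = 0" using Mx_in[OF sg, of x i] z by auto
qed

lemma jst:
  assumes "simple_graph n E" "Mx E x i \<noteq> 0"
  shows "jst E x i \<in> nbrs E i" "x (jst E x i) = Mx E x i"
proof -
  have "Mx E x i \<in> insert 0 (x ` nbrs E i)"
    unfolding Mx_def by (rule Max_in) (auto simp: finite_nbrs[OF assms(1)])
  then have "\<exists>j. j \<in> nbrs E i \<and> x j = Mx E x i" using assms(2) by auto
  then have "jst E x i \<in> nbrs E i \<and> x (jst E x i) = Mx E x i"
    unfolding jst_def by (rule someI_ex)
  then show "jst E x i \<in> nbrs E i" "x (jst E x i) = Mx E x i" by auto
qed

lemma Rset_indep: "x \<in> Rset n E \<Longrightarrow> 1 \<le> x i \<Longrightarrow> 1 \<le> x j \<Longrightarrow> {i, j} \<notin> E"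
  by (simp add: Rset_def)

lemma no_loop:
  assumes sg: "simple_graph n E" shows "{i, i} \<notin> E"
proof
  assume "{i, i} \<in> E"
  then obtain a b where ab: "{i, i} = {a, b}" "a \<noteq> b" using sg_edge[OF sg] by blast
  have e: "{i} = {a, b}" using ab(1) by simp
  have "a \<in> {i}" "b \<in> {i}" unfolding e by simp_all
  then show False using ab(2) by simp
qed

lemma newx_in:
  assumes sg: "simple_graph n E" and x: "x \<in> Rset n E" and i: "i \<in> {1..n}"
  shows "newx E x i \<in> Rset n E"
proof (cases "Mx E x i = 0")
  case True
  then have z: "\<And>j. j \<in> nbrs E i \<Longrightarrow> x j = 0" using Mx_zero[OF sg] by blast
  have ii: "{i, i} \<notin> E" by (rule no_loop[OF sg])
  define y where "y = x(i := x i + 1)"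
  have "y \<in> Rset n E"
    unfolding Rset_def
  proof (intro CollectI conjI allI impI)
    fix k assume "k \<notin> {1..n}" then show "y k = 0" using x i by (auto simp: y_def Rset_def)
  next
    fix a b assume a: "1 \<le> y a" and b: "1 \<le> y b"
    show "{a, b} \<notin> E"
    proof (cases "a = i"; cases "b = i")
      assume "a = i" "b = i" then show ?thesis using ii by simp
    next
      assume "a = i" "b \<noteq> i"
      then have "1 \<le> x b" using b by (simp add: y_def)
      then have "b \<notin> nbrs E i" using z[of b] by auto
      then show ?thesis using \<open>a = i\<close> by (simp add: nbrs_def)
    next
      assume "a \<noteq> i" "b = i"
      then have "1 \<le> x a" using a by (simp add: y_def)
      then have "a \<notin> nbrs E i" using z[of a] by auto
      then show ?thesis using \<open>b = i\<close> by (simp add: nbrs_def insert_commute)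
    next
      assume "a \<noteq> i" "b \<noteq> i"
      then have "1 \<le> x a" "1 \<le> x b" using a b by (auto simp: y_def)
      then show ?thesis using x by (simp add: Rset_def)
    qed
  qed
  then show ?thesis using True by (simp add: newx_def y_def)
next
  case False
  define j where "j = jst E x i"
  define y where "y = x(j := x j - 1)"
  have le: "y k \<le> x k" for k by (simp add: y_def)
  have "y \<in> Rset n E"
    unfolding Rset_def
  proof (intro CollectI conjI allI impI)
    fix k assume "k \<notin> {1..n}" then show "y k = 0" using x le[of k] by (auto simp: Rset_def)
  next
    fix a b assume a: "1 \<le> y a" and b: "1 \<le> y b"
    then have "1 \<le> x a" "1 \<le> x b" using le[of a] le[of b] by linarith+
    then show "{a, b} \<notin> E" using x by (simp add: Rset_def)
  qed
  then show ?thesis using False by (simp add: newx_def y_def j_def)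
qed



definition nxt :: "nat \<Rightarrow> nat set set \<Rightarrow> nat \<Rightarrow> nat \<Rightarrow> nat" where
  "nxt n E s i = enc n E (newx E (dec n E s) i)"

lemma snd_act: "snd (act n E s i) = nxt n E s i"
  by (simp add: act_def nxt_def)

lemma nbrs_in: "simple_graph n E \<Longrightarrow> j \<in> nbrs E i \<Longrightarrow> j \<in> {1..n}"
  by (rule sg_nbrs(1))

lemma dec_nxt:
  assumes sg: "simple_graph n E" and i: "i \<in> {1..n}"
  shows "dec n E (nxt n E s i) = newx E (dec n E s) i"
  unfolding nxt_def by (rule dec_enc[OF newx_in[OF sg dec_in i]])

lemma ml_row:
  assumes sg: "simple_graph n E" and i: "i \<in> {1..n}"
  shows "mlPhi n E s i None s' + (\<Sum>j\<in>{1..n}. mlPhi n E s i (Some j) s')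
         = (if s' = nxt n E s i then 1 else 0)"
proof (cases "Mx E (dec n E s) i = 0")
  case True
  then have a: "act n E s i = (None, nxt n E s i)" by (simp add: act_def nxt_def)
  show ?thesis by (simp add: mlPhi_def a)
next
  case False
  define j0 where "j0 = jst E (dec n E s) i"
  have j0: "j0 \<in> {1..n}" using jst(1)[OF sg False] nbrs_in[OF sg] by (simp add: j0_def)
  have a: "act n E s i = (Some j0, nxt n E s i)" using False by (simp add: act_def nxt_def j0_def)
  have "(\<Sum>j\<in>{1..n}. mlPhi n E s i (Some j) s') = (\<Sum>j\<in>{1..n}. if j = j0 then (if s' = nxt n E s i then 1 else 0) else 0)"
    by (rule sum.cong) (auto simp: mlPhi_def a)
  also have "\<dots> = (if s' = nxt n E s i then 1 else 0)" using j0 by (simp add: sum.delta)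
  finally show ?thesis by (simp add: mlPhi_def a)
qed

lemma ml_policy:
  assumes n: "n \<ge> 1" and sg: "simple_graph n E"
  shows "matching_policy n E (dec n E) (enc n E (\<lambda>_. 0)) (mlPhi n E)"
  unfolding matching_policy_def
proof (intro conjI allI impI)
  fix s k assume "k \<notin> {1..n}" then show "dec n E s k = 0" using dec_in[of n E s] by (simp add: Rset_def)
next
  fix s
  show "(dec n E s = (\<lambda>_. 0)) = (s = enc n E (\<lambda>_. 0))"
  proof
    assume "dec n E s = (\<lambda>_. 0)"
    then show "s = enc n E (\<lambda>_. 0)" using enc_dec[OF n sg, of s] by simp
  next
    assume "s = enc n E (\<lambda>_. 0)"
    then show "dec n E s = (\<lambda>_. 0)" using dec_enc[OF zero_in_Rset] by simp
  qed
next
  fix s i j s' show "0 \<le> mlPhi n E s i j s'" by (simp add: mlPhi_def)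
next
  fix s i assume i: "i \<in> {1..n}"
  have "((\<lambda>s'. if s' = nxt n E s i then 1 else 0) has_sum (1::real)) UNIV"
    by (rule has_sum_finite_neutralI[of "{nxt n E s i}"]) auto
  moreover have "(\<lambda>s'. mlPhi n E s i None s' + (\<Sum>j\<in>{1..n}. mlPhi n E s i (Some j) s'))
      = (\<lambda>s'. if s' = nxt n E s i then 1 else 0)"
    by (rule ext) (rule ml_row[OF sg i])
  ultimately show "((\<lambda>s'. mlPhi n E s i None s' + (\<Sum>j\<in>{1..n}. mlPhi n E s i (Some j) s')) has_sum 1) UNIV"
    by (simp only:)
next
  fix s i j s' assume i: "i \<in> {1..n}" and pos: "0 < mlPhi n E s i j s'"
  then have a: "(j, s') = act n E s i" by (simp add: mlPhi_def split: if_splits)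
  define x where "x = dec n E s"
  have ds': "dec n E s' = newx E x i"
    using a dec_nxt[OF sg i, of s] by (simp add: act_def nxt_def x_def)
  show "j = None \<and> dec n E s' = (dec n E s)(i := dec n E s i + 1) \<or>
       (\<exists>j'. j = Some j' \<and> j' \<in> nbrs E i \<and> 1 \<le> dec n E s j' \<and> dec n E s' = (dec n E s)(j' := dec n E s j' - 1))"
  proof (cases "Mx E x i = 0")
    case True
    then have "j = None" using a by (simp add: act_def x_def)
    then show ?thesis using ds' True by (simp add: newx_def x_def)
  next
    case False
    then have "j = Some (jst E x i)" using a by (simp add: act_def x_def)
    moreover have "jst E x i \<in> nbrs E i" "x (jst E x i) = Mx E x i" using jst[OF sg False] by auto
    ultimately show ?thesis using ds' False by (auto simp: newx_def x_def)
  qed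
qed

lemma ml_chain:
  assumes sg: "simple_graph n E"
  shows "policy_chain n lam (mlPhi n E) s y =
           (\<Sum>i\<in>{1..n}. (lam i / (\<Sum>k\<in>{1..n}. lam k)) * (if y = nxt n E s i then 1 else 0))"
  unfolding policy_chain_def
proof (rule sum.cong)
  fix i assume i: "i \<in> {1..n}"
  show "lam i / (\<Sum>k\<in>{1..n}. lam k) * (mlPhi n E s i None y + (\<Sum>j\<in>{1..n}. mlPhi n E s i (Some j) y)) =
        lam i / (\<Sum>k\<in>{1..n}. lam k) * (if y = nxt n E s i then 1 else 0)"
    by (simp only: ml_row[OF sg i])
qed simp

definition tot :: "nat \<Rightarrow> (nat \<Rightarrow> nat) \<Rightarrow> nat" where
  "tot n x = (\<Sum>k\<in>{1..n}. x k)"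

lemma sum_upd_nat:
  fixes h :: "nat \<Rightarrow> nat"
  assumes "finite A" "i \<in> A"
  shows "sum (h(i := v)) A + h i = sum h A + v"
proof -
  have a: "sum (h(i := v)) A = v + sum (h(i := v)) (A - {i})"
    using sum.remove[OF assms, of "h(i := v)"] by simp
  have b: "sum (h(i := v)) (A - {i}) = sum h (A - {i})"
    by (rule sum.cong) auto
  have c: "sum h A = h i + sum h (A - {i})"
    using sum.remove[OF assms, of h] by simp
  show ?thesis using a b c by simp
qed

lemma tot_inc: "i \<in> {1..n} \<Longrightarrow> tot n (x(i := x i + 1)) = tot n x + 1"
  unfolding tot_def using sum_upd_nat[of "{1..n}" i x "x i + 1"] by simp

lemma tot_dec: "i \<in> {1..n} \<Longrightarrow> 1 \<le> x i \<Longrightarrow> tot n (x(i := x i - 1)) + 1 = tot n x"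
  unfolding tot_def using sum_upd_nat[of "{1..n}" i x "x i - 1"] by simp

lemma has_nbr:
  assumes sg: "simple_graph n E" and surj: "surjective_graph n E" and k: "k \<in> {1..n}"
  shows "nbrs E k \<noteq> {}"
proof
  assume none: "nbrs E k = {}"
  have "j = k" if "(adj E)\<^sup>*\<^sup>* k j" for j
    using that
  proof (induction rule: rtranclp_induct)
    case base then show ?case by simp
  next
    case (step y z)
    then have "{k, z} \<in> E" by (simp add: adj_def)
    then have "z \<in> nbrs E k" by (simp add: nbrs_def)
    then show ?case using none by simp
  qed
  then have C: "component E k \<subseteq> {k}" by (auto simp: component_def)
  have "bipartite_on E (component E k)"
    unfolding bipartite_on_def
  proof (intro exI[of _ "\<lambda>_. True"] ballI impI)
    fix x y assume "x \<in> component E k" "y \<in> component E k" "{x, y} \<in> E"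
    then have "x = k" "y = k" "{x, y} \<in> E" using C by auto
    then show "True \<noteq> True" using no_loop[OF sg, of k] by simp
  qed
  then show False using surj k by (simp add: surjective_graph_def)
qed



lemma step_pos:
  assumes sg: "simple_graph n E" and lam: "\<forall>i\<in>{1..n}. lam i > 0" and i: "i \<in> {1..n}"
  shows "0 < policy_chain n lam (mlPhi n E) s (nxt n E s i)"
proof -
  define L where "L = (\<Sum>k\<in>{1..n}. lam k)"
  have L: "0 < L" unfolding L_def using i lam by (intro sum_pos) auto
  have nn: "\<forall>i'\<in>{1..n}. 0 \<le> lam i' / L * (if nxt n E s i = nxt n E s i' then 1 else 0)"
    using lam L by (auto intro!: divide_nonneg_pos less_imp_le)
  have "lam i / L * (if nxt n E s i = nxt n E s i then 1 else 0)
        \<le> (\<Sum>i'\<in>{1..n}. lam i' / L * (if nxt n E s i = nxt n E s i' then 1 else 0))"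
    by (rule member_le_sum[OF i]) (use nn in auto)
  moreover have "0 < lam i / L" using lam i L by simp
  ultimately show ?thesis unfolding ml_chain[OF sg] L_def[symmetric] by simp
qed

lemma tot_zero:
  assumes "x \<in> Rset n E" "tot n x = 0"
  shows "x = (\<lambda>_. 0)"
proof
  fix k
  show "x k = 0"
  proof (cases "k \<in> {1..n}")
    case True then show ?thesis using assms(2) by (simp add: tot_def)
  next
    case False then show ?thesis using assms(1) by (simp add: Rset_def)
  qed
qed

lemma tot_pos:
  assumes "tot n x \<noteq> 0"
  obtains k where "k \<in> {1..n}" "1 \<le> x k"
proof -
  have "\<exists>k\<in>{1..n}. x k \<noteq> 0" using assms by (simp add: tot_def)
  then show ?thesis using that by (auto simp: Suc_le_eq)
qed

lemma Rset_le: "x \<in> Rset n E \<Longrightarrow> (\<And>a. y a \<le> x a) \<Longrightarrow> y \<in> Rset n E"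
proof -
  assume x: "x \<in> Rset n E" and le: "\<And>a. y a \<le> x a"
  show "y \<in> Rset n E"
    unfolding Rset_def
  proof (intro CollectI conjI allI impI)
    fix k assume "k \<notin> {1..n}" then show "y k = 0" using x le[of k] by (auto simp: Rset_def)
  next
    fix a b assume "1 \<le> y a" "1 \<le> y b"
    then have "1 \<le> x a" "1 \<le> x b" using le[of a] le[of b] by linarith+
    then show "{a, b} \<notin> E" using x by (simp add: Rset_def)
  qed
qed

lemma reach_zero:
  assumes n: "n \<ge> 1" and sg: "simple_graph n E" and surj: "surjective_graph n E"
    and lam: "\<forall>i\<in>{1..n}. lam i > 0"
  shows "(\<lambda>a b. 0 < policy_chain n lam (mlPhi n E) a b)\<^sup>*\<^sup>* s (enc n E (\<lambda>_. 0))"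
proof -
  let ?R = "\<lambda>a b. 0 < policy_chain n lam (mlPhi n E) a b"
  have "\<forall>s. tot n (dec n E s) = m \<longrightarrow> ?R\<^sup>*\<^sup>* s (enc n E (\<lambda>_. 0))" for m
  proof (induction m)
    case 0
    show ?case
    proof (intro allI impI)
      fix s assume "tot n (dec n E s) = 0"
      then have "dec n E s = (\<lambda>_. 0)" by (rule tot_zero[OF dec_in])
      then have "s = enc n E (\<lambda>_. 0)" using enc_dec[OF n sg, of s] by simp
      then show "?R\<^sup>*\<^sup>* s (enc n E (\<lambda>_. 0))" by simp
    qed
  next
    case (Suc m)
    show ?case
    proof (intro allI impI)
      fix s assume ts: "tot n (dec n E s) = Suc m"
      define x where "x = dec n E s"
      obtain k where k: "k \<in> {1..n}" "1 \<le> x k" using tot_pos[of n x] ts by (auto simp: x_def)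
      obtain i where i: "i \<in> nbrs E k" using has_nbr[OF sg surj k(1)] by blast
      have i1: "i \<in> {1..n}" using nbrs_in[OF sg i] .
      have ki: "k \<in> nbrs E i" using i nbrs_sym by metis
      have "1 \<le> Mx E x i" using Mx_ge[OF sg ki, of x] k(2) by linarith
      then have M: "Mx E x i \<noteq> 0" by simp
      define j where "j = jst E x i"
      have j: "j \<in> {1..n}" "1 \<le> x j" using jst[OF sg M] nbrs_in[OF sg] \<open>1 \<le> Mx E x i\<close>
        by (auto simp: j_def)
      have nx: "dec n E (nxt n E s i) = x(j := x j - 1)"
        using dec_nxt[OF sg i1, of s] M by (simp add: newx_def x_def j_def)
      have "tot n (dec n E (nxt n E s i)) = m"
        using tot_dec[of j n x, OF j] ts unfolding nx x_def[symmetric] by simp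
      then have "?R\<^sup>*\<^sup>* (nxt n E s i) (enc n E (\<lambda>_. 0))" using Suc.IH by blast
      moreover have "?R s (nxt n E s i)" by (rule step_pos[OF sg lam i1])
      ultimately show "?R\<^sup>*\<^sup>* s (enc n E (\<lambda>_. 0))"
        by (rule converse_rtranclp_into_rtranclp[rotated])
    qed
  qed
  then show ?thesis by blast
qed

lemma reach_from_zero:
  assumes n: "n \<ge> 1" and sg: "simple_graph n E"
    and lam: "\<forall>i\<in>{1..n}. lam i > 0"
  shows "(\<lambda>a b. 0 < policy_chain n lam (mlPhi n E) a b)\<^sup>*\<^sup>* (enc n E (\<lambda>_. 0)) s"
proof -
  let ?R = "\<lambda>a b. 0 < policy_chain n lam (mlPhi n E) a b"
  have "\<forall>s. tot n (dec n E s) = m \<longrightarrow> ?R\<^sup>*\<^sup>* (enc n E (\<lambda>_. 0)) s" for m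
  proof (induction m)
    case 0
    show ?case
    proof (intro allI impI)
      fix s assume "tot n (dec n E s) = 0"
      then have "dec n E s = (\<lambda>_. 0)" by (rule tot_zero[OF dec_in])
      then have "s = enc n E (\<lambda>_. 0)" using enc_dec[OF n sg, of s] by simp
      then show "?R\<^sup>*\<^sup>* (enc n E (\<lambda>_. 0)) s" by simp
    qed
  next
    case (Suc m)
    show ?case
    proof (intro allI impI)
      fix s assume ts: "tot n (dec n E s) = Suc m"
      define x where "x = dec n E s"
      have xR: "x \<in> Rset n E" by (simp add: x_def dec_in)
      obtain k where k: "k \<in> {1..n}" "1 \<le> x k" using tot_pos[of n x] ts by (auto simp: x_def)
      define y where "y = x(k := x k - 1)"
      have yR: "y \<in> Rset n E" by (rule Rset_le[OF xR]) (simp add: y_def)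
      have ty: "tot n y = m" using tot_dec[of k n x, OF k] ts by (simp add: y_def x_def)
      define sy where "sy = enc n E y"
      have dsy: "dec n E sy = y" by (simp add: sy_def dec_enc[OF yR])
      have IH: "?R\<^sup>*\<^sup>* (enc n E (\<lambda>_. 0)) sy" using Suc.IH dsy ty by metis
      have z: "\<forall>j\<in>nbrs E k. y j = 0"
      proof
        fix j assume j: "j \<in> nbrs E k"
        have "j \<noteq> k" by (rule sg_nbrs(3)[OF sg j])
        then have yj: "y j = x j" by (simp add: y_def)
        have "{k, j} \<in> E" using j by (simp add: nbrs_def)
        then have "\<not> 1 \<le> x j" using Rset_indep[OF xR k(2)] by blast
        then show "y j = 0" using yj by simp
      qed
      then have M: "Mx E y k = 0" using Mx_zero[OF sg] by blast
      have "newx E y k = x" using M k(2) by (auto simp: newx_def y_def)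
      then have "nxt n E sy k = s" by (simp add: nxt_def dsy x_def enc_dec[OF n sg])
      moreover have "?R sy (nxt n E sy k)" by (rule step_pos[OF sg lam k(1)])
      ultimately have "?R sy s" by simp
      with IH show "?R\<^sup>*\<^sup>* (enc n E (\<lambda>_. 0)) s" by (rule rtranclp.rtrancl_into_rtrancl)
    qed
  qed
  then show ?thesis by blast
qed

lemma ml_irreducible:
  assumes n: "n \<ge> 1" and sg: "simple_graph n E" and surj: "surjective_graph n E"
    and lam: "\<forall>i\<in>{1..n}. lam i > 0"
  shows "irreducible (policy_chain n lam (mlPhi n E))"
  unfolding irreducible_def
  using reach_zero[OF assms] reach_from_zero[OF n sg lam] by (blast intro: rtranclp_trans)



lemma sum_upd_gen:
  fixes g :: "nat \<Rightarrow> real" and h :: "nat \<Rightarrow> nat"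
  assumes "finite A" "j \<in> A"
  shows "(\<Sum>k\<in>A. g ((h(j := v)) k)) = (\<Sum>k\<in>A. g (h k)) - g (h j) + g v"
proof -
  have a: "(\<Sum>k\<in>A. g ((h(j := v)) k)) = g v + (\<Sum>k\<in>A - {j}. g ((h(j := v)) k))"
    using sum.remove[OF assms, of "\<lambda>k. g ((h(j := v)) k)"] by simp
  have b: "(\<Sum>k\<in>A - {j}. g ((h(j := v)) k)) = (\<Sum>k\<in>A - {j}. g (h k))"
    by (rule sum.cong) auto
  have c: "(\<Sum>k\<in>A. g (h k)) = g (h j) + (\<Sum>k\<in>A - {j}. g (h k))"
    using sum.remove[OF assms, of "\<lambda>k. g (h k)"] by simp
  show ?thesis using a b c by simp
qed

definition Vf :: "nat \<Rightarrow> nat set set \<Rightarrow> nat \<Rightarrow> real" where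
  "Vf n E s = (\<Sum>k\<in>{1..n}. (real (dec n E s k))\<^sup>2)"

lemma V_next:
  assumes sg: "simple_graph n E" and i: "i \<in> {1..n}"
  shows "Vf n E (nxt n E s i) = Vf n E s + 1 + 2 * real (dec n E s i) - 2 * real (Mx E (dec n E s) i)"
proof -
  define x where "x = dec n E s"
  have xR: "x \<in> Rset n E" by (simp add: x_def dec_in)
  have dn: "dec n E (nxt n E s i) = newx E x i" by (simp add: dec_nxt[OF sg i] x_def)
  show ?thesis
  proof (cases "Mx E x i = 0")
    case True
    have "Vf n E (nxt n E s i) = (\<Sum>k\<in>{1..n}. (real ((x(i := x i + 1)) k))\<^sup>2)"
      by (simp add: Vf_def dn newx_def True)
    also have "\<dots> = Vf n E s - (real (x i))\<^sup>2 + (real (x i + 1))\<^sup>2"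
      using sum_upd_gen[of "{1..n}" i "\<lambda>a. (real a)\<^sup>2" x "x i + 1"] i by (simp add: Vf_def x_def)
    finally show ?thesis using True by (simp add: x_def power2_eq_square algebra_simps)
  next
    case False
    define j where "j = jst E x i"
    have j: "j \<in> nbrs E i" "x j = Mx E x i" using jst[OF sg False] by (auto simp: j_def)
    have j1: "j \<in> {1..n}" using nbrs_in[OF sg j(1)] .
    have xj: "1 \<le> x j" using j(2) False by simp
    have xi: "x i = 0"
    proof (rule ccontr)
      assume "x i \<noteq> 0"
      then have "1 \<le> x i" by simp
      moreover have "{i, j} \<in> E" using j(1) by (simp add: nbrs_def)
      ultimately show False using Rset_indep[OF xR _ xj] by blast
    qed
    have "Vf n E (nxt n E s i) = (\<Sum>k\<in>{1..n}. (real ((x(j := x j - 1)) k))\<^sup>2)"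
      by (simp add: Vf_def dn newx_def False j_def)
    also have "\<dots> = Vf n E s - (real (x j))\<^sup>2 + (real (x j - 1))\<^sup>2"
      using sum_upd_gen[of "{1..n}" j "\<lambda>a. (real a)\<^sup>2" x "x j - 1"] j1 by (simp add: Vf_def x_def)
    also have "\<dots> = Vf n E s + 1 - 2 * real (x j)"
      using xj by (simp add: of_nat_diff power2_eq_square algebra_simps)
    finally show ?thesis using j(2) xi by (simp add: x_def)
  qed
qed

lemma count_le: "(\<Sum>t\<in>{1..K}. (if t \<le> a then 1 else 0 :: real)) = real (min a K)"
proof (induction K)
  case 0 then show ?case by simp
next
  case (Suc K)
  have "{1..Suc K} = insert (Suc K) {1..K}" by auto
  then have "(\<Sum>t\<in>{1..Suc K}. (if t \<le> a then 1 else 0 :: real))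
      = (if Suc K \<le> a then 1 else 0) + (\<Sum>t\<in>{1..K}. (if t \<le> a then 1 else 0 :: real))"
    by simp
  then show ?case using Suc by simp
qed

lemma layer:
  fixes w :: "nat \<Rightarrow> real" and a :: "nat \<Rightarrow> nat"
  assumes "finite A" "\<And>i. i \<in> A \<Longrightarrow> a i \<le> K"
  shows "(\<Sum>i\<in>A. w i * real (a i)) = (\<Sum>t\<in>{1..K}. \<Sum>i\<in>{i\<in>A. t \<le> a i}. w i)"
proof -
  have "(\<Sum>i\<in>A. w i * real (a i)) = (\<Sum>i\<in>A. w i * (\<Sum>t\<in>{1..K}. (if t \<le> a i then 1 else 0)))"
  proof (rule sum.cong)
    fix i assume "i \<in> A"
    then have "a i \<le> K" by (rule assms(2))
    then have "real (a i) = (\<Sum>t\<in>{1..K}. (if t \<le> a i then 1 else 0))"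
      by (simp only: count_le min_absorb1)
    then show "w i * real (a i) = w i * (\<Sum>t\<in>{1..K}. (if t \<le> a i then 1 else 0))" by simp
  qed simp
  also have "\<dots> = (\<Sum>i\<in>A. \<Sum>t\<in>{1..K}. (if t \<le> a i then w i else 0))"
    by (simp add: sum_distrib_left if_distrib cong: if_cong)
  also have "\<dots> = (\<Sum>t\<in>{1..K}. \<Sum>i\<in>A. (if t \<le> a i then w i else 0))" by (rule sum.swap)
  also have "\<dots> = (\<Sum>t\<in>{1..K}. \<Sum>i\<in>{i\<in>A. t \<le> a i}. w i)"
    using assms(1) by (simp add: sum.inter_filter)
  finally show ?thesis .
qed



lemma drift_layer:
  fixes lam :: "nat \<Rightarrow> real"
  assumes n: "n \<ge> 1" and sg: "simple_graph n E" and x: "x \<in> Rset n E" and dpos: "0 < \<delta>"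
    and dI: "\<And>I. independent_set n E I \<Longrightarrow> \<delta> \<le> (\<Sum>i\<in>(\<Union>k\<in>I. nbrs E k). lam i) - (\<Sum>i\<in>I. lam i)"
  shows "(\<Sum>i\<in>{1..n}. lam i * real (x i)) - (\<Sum>i\<in>{1..n}. lam i * real (Mx E x i))
         \<le> - \<delta> * real (Max (x ` {1..n}))"
proof -
  define K where "K = Max (x ` {1..n})"
  have fin: "finite (x ` {1..n})" by simp
  have ne: "x ` {1..n} \<noteq> {}" using n by auto
  have xK: "i \<in> {1..n} \<Longrightarrow> x i \<le> K" for i unfolding K_def by (rule Max_ge[OF fin]) simp
  have MK: "Mx E x i \<le> K" for i
  proof -
    have "Mx E x i \<in> insert 0 (x ` nbrs E i)" by (rule Mx_in[OF sg])
    then show ?thesis using xK nbrs_in[OF sg] by auto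
  qed
  have KI: "K \<in> x ` {1..n}" unfolding K_def by (rule Max_in[OF fin ne])
  define T where "T t = {i\<in>{1..n}. t \<le> x i}" for t
  define U where "U t = {i\<in>{1..n}. t \<le> Mx E x i}" for t
  have L1: "(\<Sum>i\<in>{1..n}. lam i * real (x i)) = (\<Sum>t\<in>{1..K}. \<Sum>i\<in>T t. lam i)"
    unfolding T_def by (rule layer) (auto intro: xK)
  have L2: "(\<Sum>i\<in>{1..n}. lam i * real (Mx E x i)) = (\<Sum>t\<in>{1..K}. \<Sum>i\<in>U t. lam i)"
    unfolding U_def by (rule layer) (auto intro: MK)
  have each: "(\<Sum>i\<in>T t. lam i) - (\<Sum>i\<in>U t. lam i) \<le> - \<delta>" if t: "t \<in> {1..K}" for t
  proof -
    have U: "U t = (\<Union>k\<in>T t. nbrs E k)"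
    proof
      show "U t \<subseteq> (\<Union>k\<in>T t. nbrs E k)"
      proof
        fix i assume "i \<in> U t"
        then have i: "i \<in> {1..n}" "t \<le> Mx E x i" by (auto simp: U_def)
        then have M: "Mx E x i \<noteq> 0" using t by auto
        have j: "jst E x i \<in> nbrs E i" "x (jst E x i) = Mx E x i" using jst[OF sg M] by auto
        have "jst E x i \<in> T t" using j i(2) nbrs_in[OF sg j(1)] by (auto simp: T_def)
        moreover have "i \<in> nbrs E (jst E x i)" using j(1) nbrs_sym by metis
        ultimately show "i \<in> (\<Union>k\<in>T t. nbrs E k)" by blast
      qed
    next
      show "(\<Union>k\<in>T t. nbrs E k) \<subseteq> U t"
      proof
        fix i assume "i \<in> (\<Union>k\<in>T t. nbrs E k)"
        then obtain k where k: "k \<in> T t" "i \<in> nbrs E k" by blast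
        have i1: "i \<in> {1..n}" by (rule nbrs_in[OF sg k(2)])
        have "k \<in> nbrs E i" using k(2) nbrs_sym by metis
        then have "x k \<le> Mx E x i" by (rule Mx_ge[OF sg])
        then show "i \<in> U t" using k(1) i1 by (auto simp: T_def U_def)
      qed
    qed
    have ind: "independent_set n E (T t)"
      unfolding independent_set_def
    proof (intro conjI ballI)
      obtain i0 where "i0 \<in> {1..n}" "x i0 = K" using KI by auto
      then have "i0 \<in> T t" using t by (auto simp: T_def)
      then show "T t \<noteq> {}" by blast
      show "T t \<subseteq> {1..n}" by (auto simp: T_def)
    next
      fix i j assume "i \<in> T t" "j \<in> T t"
      then have "1 \<le> x i" "1 \<le> x j" using t by (auto simp: T_def)
      then show "{i, j} \<notin> E" by (rule Rset_indep[OF x])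
    qed
    show ?thesis using dI[OF ind] U by simp
  qed
  have "(\<Sum>i\<in>{1..n}. lam i * real (x i)) - (\<Sum>i\<in>{1..n}. lam i * real (Mx E x i))
        = (\<Sum>t\<in>{1..K}. (\<Sum>i\<in>T t. lam i) - (\<Sum>i\<in>U t. lam i))"
    unfolding L1 L2 by (simp add: sum_subtractf)
  also have "\<dots> \<le> (\<Sum>t\<in>{1..K}. - \<delta>)" by (rule sum_mono) (rule each)
  also have "\<dots> = - \<delta> * real K" by simp
  finally show ?thesis by (simp add: K_def)
qed



lemma delta_exists:
  fixes lam :: "nat \<Rightarrow> real"
  assumes ii: "\<forall>I. independent_set n E I \<longrightarrow> (\<Sum>i\<in>I. lam i) < (\<Sum>i\<in>(\<Union>k\<in>I. nbrs E k). lam i)"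
  shows "\<exists>\<delta>>0. \<forall>I. independent_set n E I \<longrightarrow> \<delta> \<le> (\<Sum>i\<in>(\<Union>k\<in>I. nbrs E k). lam i) - (\<Sum>i\<in>I. lam i)"
proof -
  define g where "g I = (\<Sum>i\<in>(\<Union>k\<in>I. nbrs E k). lam i) - (\<Sum>i\<in>I. lam i)" for I
  define D where "D = g ` {I. independent_set n E I}"
  have "{I. independent_set n E I} \<subseteq> Pow {1..n}" by (auto simp: independent_set_def)
  then have fD: "finite D" unfolding D_def by (meson finite_Pow_iff finite_atLeastAtMost finite_imageI finite_subset)
  have pD: "\<forall>d\<in>D. 0 < d" using ii by (auto simp: D_def g_def)
  show ?thesis
  proof (cases "D = {}")
    case True
    then show ?thesis by (intro exI[of _ 1]) (auto simp: D_def)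
  next
    case False
    have "0 < Min D" using Min_in[OF fD False] pD by auto
    moreover have "\<forall>I. independent_set n E I \<longrightarrow> Min D \<le> g I"
      using Min_le[OF fD] by (auto simp: D_def)
    ultimately show ?thesis by (auto simp: g_def)
  qed
qed

lemma sufficiency:
  fixes n :: nat and E :: "nat set set" and lam :: "nat \<Rightarrow> real"
  assumes n: "n \<ge> 1" and sg: "simple_graph n E" and surj: "surjective_graph n E"
    and lam: "\<forall>i\<in>{1..n}. lam i > 0"
    and ii: "\<forall>I. independent_set n E I \<longrightarrow> (\<Sum>i\<in>I. lam i) < (\<Sum>i\<in>(\<Union>k\<in>I. nbrs E k). lam i)"
  shows "stabilizable n E lam"
proof -
  obtain \<delta> where dpos: "0 < \<delta>"
    and dI: "\<And>I. independent_set n E I \<Longrightarrow> \<delta> \<le> (\<Sum>i\<in>(\<Union>k\<in>I. nbrs E k). lam i) - (\<Sum>i\<in>I. lam i)"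
    using delta_exists[OF ii] by blast
  define P where "P = policy_chain n lam (mlPhi n E)"
  define L where "L = (\<Sum>k\<in>{1..n}. lam k)"
  define c where "c i = lam i / L" for i
  have Lpos: "0 < L" unfolding L_def using n lam by (intro sum_pos) auto
  have cnn: "i \<in> {1..n} \<Longrightarrow> 0 \<le> c i" for i using lam Lpos by (simp add: c_def less_imp_le)
  have csum: "(\<Sum>i\<in>{1..n}. c i) = 1"
    using Lpos by (simp add: c_def L_def sum_divide_distrib[symmetric])
  have Pe: "P s y = (\<Sum>i\<in>{1..n}. c i * (if y = nxt n E s i then 1 else 0))" for s y
    unfolding P_def c_def L_def by (rule ml_chain[OF sg])
  have ind_has: "((\<lambda>y. if y = z then v else 0) has_sum v) UNIV" for z and v :: real
    by (rule has_sum_finite_neutralI[of "{z}"]) auto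
  have stP: "stoch P"
    unfolding stoch_def
  proof (intro conjI allI)
    fix s y show "0 \<le> P s y" unfolding Pe by (intro sum_nonneg) (simp add: cnn)
  next
    fix s
    have "((\<lambda>y. \<Sum>i\<in>{1..n}. c i * (if y = nxt n E s i then 1 else 0)) has_sum (\<Sum>i\<in>{1..n}. c i * 1)) UNIV"
      by (intro has_sum_sum' has_sum_cmult_right ind_has) auto
    then show "(P s has_sum 1) UNIV" using csum by (simp add: Pe[abs_def])
  qed
  have irr: "irreducible P" unfolding P_def by (rule ml_irreducible[OF n sg surj lam])
  define V where "V = Vf n E"
  define PV where "PV s = (\<Sum>i\<in>{1..n}. c i * V (nxt n E s i))" for s
  have Vnn: "0 \<le> V s" for s by (simp add: V_def Vf_def sum_nonneg)
  have PVh: "((\<lambda>y. P s y * V y) has_sum PV s) UNIV" for s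
  proof -
    have "((\<lambda>y. \<Sum>i\<in>{1..n}. c i * (if y = nxt n E s i then V (nxt n E s i) else 0)) has_sum PV s) UNIV"
      unfolding PV_def by (intro has_sum_sum' has_sum_cmult_right ind_has) auto
    moreover have "P s y * V y = (\<Sum>i\<in>{1..n}. c i * (if y = nxt n E s i then V (nxt n E s i) else 0))" for y
      unfolding Pe sum_distrib_right by (rule sum.cong) auto
    ultimately show ?thesis by simp
  qed
  define Kx where "Kx s = Max (dec n E s ` {1..n})" for s
  have PVb: "PV s \<le> V s + 1 - 2 * \<delta> / L * real (Kx s)" for s
  proof -
    define x where "x = dec n E s"
    have "PV s = (\<Sum>i\<in>{1..n}. c i * (V s + 1 + 2 * real (x i) - 2 * real (Mx E x i)))"
      unfolding PV_def V_def x_def by (rule sum.cong) (simp_all add: V_next[OF sg])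
    also have "\<dots> = (V s + 1) * (\<Sum>i\<in>{1..n}. c i)
        + 2 / L * ((\<Sum>i\<in>{1..n}. lam i * real (x i)) - (\<Sum>i\<in>{1..n}. lam i * real (Mx E x i)))"
    proof -
      define A where "A = V s + 1"
      define a where "a i = real (x i)" for i
      define b where "b i = real (Mx E x i)" for i
      have "(\<Sum>i\<in>{1..n}. c i * (A + 2 * a i - 2 * b i))
            = (\<Sum>i\<in>{1..n}. A * c i + 2 * (c i * a i) - 2 * (c i * b i))"
        by (rule sum.cong) (simp_all add: algebra_simps)
      also have "\<dots> = A * (\<Sum>i\<in>{1..n}. c i) + 2 * (\<Sum>i\<in>{1..n}. c i * a i) - 2 * (\<Sum>i\<in>{1..n}. c i * b i)"
        by (simp add: sum.distrib sum_subtractf sum_distrib_left)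
      also have "(\<Sum>i\<in>{1..n}. c i * a i) = (\<Sum>i\<in>{1..n}. lam i * a i) / L"
        by (simp add: c_def sum_divide_distrib)
      also have "(\<Sum>i\<in>{1..n}. c i * b i) = (\<Sum>i\<in>{1..n}. lam i * b i) / L"
        by (simp add: c_def sum_divide_distrib)
      finally show ?thesis by (simp add: A_def a_def b_def algebra_simps)
    qed
    also have "\<dots> \<le> (V s + 1) + 2 / L * (- \<delta> * real (Kx s))"
    proof -
      have d: "(\<Sum>i\<in>{1..n}. lam i * real (x i)) - (\<Sum>i\<in>{1..n}. lam i * real (Mx E x i)) \<le> - \<delta> * real (Kx s)"
        using drift_layer[OF n sg _ dpos dI, of x] by (simp add: x_def Kx_def dec_in)
      have "2 / L * ((\<Sum>i\<in>{1..n}. lam i * real (x i)) - (\<Sum>i\<in>{1..n}. lam i * real (Mx E x i)))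
            \<le> 2 / L * (- \<delta> * real (Kx s))"
        by (rule mult_left_mono[OF d]) (use Lpos in simp)
      then show ?thesis using csum by simp
    qed
    finally show ?thesis by (simp add: algebra_simps)
  qed
  define K0 where "K0 = nat \<lceil>L / \<delta>\<rceil>"
  define F where "F = {s. \<forall>k\<in>{1..n}. dec n E s k \<le> K0}"
  have finF: "finite F"
  proof -
    define G where "G = {x. \<forall>k. (k \<in> {1..n} \<longrightarrow> x k \<in> {0..K0}) \<and> (k \<notin> {1..n} \<longrightarrow> x k = (0::nat))}"
    have fG: "finite G" unfolding G_def by (rule finite_set_of_finite_funs) auto
    have injd: "inj (dec n E)"
      by (rule injI) (simp add: dec_def Rset_countable Rset_infinite[OF n sg])
    have "F \<subseteq> dec n E -` G"
    proof
      fix s assume "s \<in> F"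
      then show "s \<in> dec n E -` G" using dec_in[of n E s] by (auto simp: F_def G_def Rset_def)
    qed
    moreover have "finite (dec n E -` G)" by (rule finite_vimageI[OF fG injd])
    ultimately show ?thesis by (rule finite_subset)
  qed
  have out: "PV s \<le> V s - 1" if sF: "s \<notin> F" for s
  proof -
    have "\<exists>k\<in>{1..n}. K0 < dec n E s k" using sF by (auto simp: F_def not_le)
    then obtain k where k: "k \<in> {1..n}" "K0 < dec n E s k" by blast
    have "dec n E s k \<le> Kx s" unfolding Kx_def by (rule Max_ge) (use k in auto)
    then have "real K0 < real (Kx s)" using k by linarith
    moreover have "L / \<delta> \<le> real K0" unfolding K0_def by linarith
    ultimately have "L / \<delta> \<le> real (Kx s)" by linarith
    then have "L \<le> \<delta> * real (Kx s)" using dpos by (simp add: field_simps)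
    then have "2 \<le> 2 * \<delta> / L * real (Kx s)" using Lpos by (simp add: field_simps)
    then show ?thesis using PVb[of s] by linarith
  qed
  have inn: "PV s \<le> V s + 1" for s
  proof -
    have "0 \<le> 2 * \<delta> / L * real (Kx s)" using dpos Lpos by simp
    then show ?thesis using PVb[of s] by linarith
  qed
  have pr: "positive_recurrent P"
    unfolding positive_recurrent_def
  proof
    fix s
    show "positive_recurrent_state P s"
    proof (rule foster[where b=1 and F=F and V=V and PV=PV, OF stP irr Vnn finF PVh])
      show "\<And>x. x \<notin> F \<Longrightarrow> PV x \<le> V x - 1" by (rule out)
      show "\<And>x. PV x \<le> V x + 1" by (rule inn)
    qed simp
  qed
  have mp: "matching_policy n E (dec n E) (enc n E (\<lambda>_. 0)) (mlPhi n E)" by (rule ml_policy[OF n sg])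
  show ?thesis unfolding stabilizable_def using mp irr pr by (auto simp: P_def)
qed



definition nb :: "(nat \<times> nat) set \<Rightarrow> nat set \<Rightarrow> nat set" where
  "nb D S = {b. \<exists>a\<in>S. (a, b) \<in> D}"

definition flow :: "(nat \<times> nat) set \<Rightarrow> nat set \<Rightarrow> nat set \<Rightarrow> (nat \<Rightarrow> real) \<Rightarrow> (nat \<Rightarrow> real)
    \<Rightarrow> (nat \<times> nat \<Rightarrow> real) \<Rightarrow> bool" where
  "flow D A B s d f \<longleftrightarrow> (\<forall>p. f p \<noteq> 0 \<longrightarrow> p \<in> D) \<and> (\<forall>p. 0 \<le> f p) \<and>
     (\<forall>a\<in>A. (\<Sum>b\<in>B. f (a, b)) = s a) \<and> (\<forall>b\<in>B. (\<Sum>a\<in>A. f (a, b)) = d b)"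

lemma flowD:
  assumes "flow D A B s d f"
  shows "f p \<noteq> 0 \<Longrightarrow> p \<in> D" "0 \<le> f p" "a \<in> A \<Longrightarrow> (\<Sum>b\<in>B. f (a, b)) = s a"
    "b \<in> B \<Longrightarrow> (\<Sum>a\<in>A. f (a, b)) = d b"
  using assms unfolding flow_def by blast+

lemma sum_fun_upd_real:
  fixes g :: "nat \<Rightarrow> real"
  assumes "finite X"
  shows "sum (g(w := c)) X = sum g X - (if w \<in> X then g w - c else 0)"
proof (cases "w \<in> X")
  case True
  have a: "sum (g(w := c)) X = c + sum (g(w := c)) (X - {w})"
    using sum.remove[OF assms True, of "g(w := c)"] by simp
  have b: "sum (g(w := c)) (X - {w}) = sum g (X - {w})" by (rule sum.cong) auto
  have c: "sum g X = g w + sum g (X - {w})" using sum.remove[OF assms True, of g] by simp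
  show ?thesis using a b c True by simp
next
  case False
  then have "sum (g(w := c)) X = sum g X" by (intro sum.cong) auto
  then show ?thesis using False by simp
qed

lemma nb_mono: "S \<subseteq> S' \<Longrightarrow> nb D S \<subseteq> nb D S'"
  by (auto simp: nb_def)

lemma nb_sub: "D \<subseteq> A \<times> B \<Longrightarrow> nb D S \<subseteq> B"
  by (auto simp: nb_def)

lemma flow_mono: "flow D1 A B s d f \<Longrightarrow> D1 \<subseteq> D \<Longrightarrow> flow D A B s d f"
  by (auto simp: flow_def)

lemma flow_bump:
  assumes fl: "flow D A B (s(u := s u - t)) (d(v := d v - t)) f1"
    and uv: "(u, v) \<in> D" "u \<in> A" "v \<in> B" and t: "0 \<le> t" and fin: "finite A" "finite B"
  shows "flow D A B s d (\<lambda>p. f1 p + (if p = (u, v) then t else 0))"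
  unfolding flow_def
proof (intro conjI allI impI ballI)
  fix p assume "f1 p + (if p = (u, v) then t else 0) \<noteq> 0"
  then show "p \<in> D"
  proof (cases "p = (u, v)")
    case True then show ?thesis using uv by simp
  next
    case False then show ?thesis using \<open>f1 p + (if p = (u, v) then t else 0) \<noteq> 0\<close> flowD(1)[OF fl] by simp
  qed
next
  fix p show "0 \<le> f1 p + (if p = (u, v) then t else 0)" using flowD(2)[OF fl, of p] t by simp
next
  fix a assume a: "a \<in> A"
  have "(\<Sum>b\<in>B. f1 (a, b) + (if (a, b) = (u, v) then t else 0))
        = (\<Sum>b\<in>B. f1 (a, b)) + (\<Sum>b\<in>B. (if b = v then (if a = u then t else 0) else 0))"
    by (simp only: sum.distrib[symmetric]) (rule sum.cong; auto)
  also have "(\<Sum>b\<in>B. (if b = v then (if a = u then t else 0) else 0)) = (if a = u then t else 0)"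
    using uv(3) fin(2) by (simp add: sum.delta)
  also have "(\<Sum>b\<in>B. f1 (a, b)) = (s(u := s u - t)) a" using fl a by (simp add: flow_def)
  finally show "(\<Sum>b\<in>B. f1 (a, b) + (if (a, b) = (u, v) then t else 0)) = s a" by auto
next
  fix b assume b: "b \<in> B"
  have "(\<Sum>a\<in>A. f1 (a, b) + (if (a, b) = (u, v) then t else 0))
        = (\<Sum>a\<in>A. f1 (a, b)) + (\<Sum>a\<in>A. (if a = u then (if b = v then t else 0) else 0))"
    by (simp only: sum.distrib[symmetric]) (rule sum.cong; auto)
  also have "(\<Sum>a\<in>A. (if a = u then (if b = v then t else 0) else 0)) = (if b = v then t else 0)"
    using uv(2) fin(1) by (simp add: sum.delta)
  also have "(\<Sum>a\<in>A. f1 (a, b)) = (d(v := d v - t)) b" using fl b by (simp add: flow_def)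
  finally show "(\<Sum>a\<in>A. f1 (a, b) + (if (a, b) = (u, v) then t else 0)) = d b" by auto
qed

lemma flow_split:
  assumes f1: "flow D1 A1 B1 s d f1" and f2: "flow D2 A2 B2 s d f2"
    and D1: "D1 \<subseteq> A1 \<times> B1" and D2: "D2 \<subseteq> A2 \<times> B2" and DD: "D1 \<union> D2 \<subseteq> D"
    and A: "A1 \<inter> A2 = {}" "A = A1 \<union> A2" and B: "B1 \<inter> B2 = {}" "B = B1 \<union> B2"
    and fin: "finite A1" "finite A2" "finite B1" "finite B2"
  shows "flow D A B s d (\<lambda>p. f1 p + f2 p)"
proof -
  have z1: "f1 p = 0" if "p \<notin> A1 \<times> B1" for p using flowD(1)[OF f1, of p] D1 that by blast
  have z2: "f2 p = 0" if "p \<notin> A2 \<times> B2" for p using flowD(1)[OF f2, of p] D2 that by blast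
  show ?thesis
    unfolding flow_def
  proof (intro conjI allI impI ballI)
    fix p assume "f1 p + f2 p \<noteq> 0"
    then have "f1 p \<noteq> 0 \<or> f2 p \<noteq> 0" by auto
    then show "p \<in> D" using flowD(1)[OF f1, of p] flowD(1)[OF f2, of p] DD by blast
  next
    fix p show "0 \<le> f1 p + f2 p" using flowD(2)[OF f1, of p] flowD(2)[OF f2, of p] by simp
  next
    fix a assume a: "a \<in> A"
    have split: "(\<Sum>b\<in>B. g b) = (\<Sum>b\<in>B1. g b) + (\<Sum>b\<in>B2. g b)" for g :: "nat \<Rightarrow> real"
      unfolding B(2) by (rule sum.union_disjoint) (use fin B in auto)
    show "(\<Sum>b\<in>B. f1 (a, b) + f2 (a, b)) = s a"
    proof (cases "a \<in> A1")
      case True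
      then have "a \<notin> A2" using A by auto
      have "\<forall>b\<in>B2. f1 (a, b) = 0" using z1 B(1) by blast
      moreover have "\<forall>b. f2 (a, b) = 0" using z2 \<open>a \<notin> A2\<close> by blast
      ultimately have "(\<Sum>b\<in>B. f1 (a, b) + f2 (a, b)) = (\<Sum>b\<in>B1. f1 (a, b))"
        unfolding split by simp
      then show ?thesis using f1 True by (simp add: flow_def)
    next
      case False
      then have "a \<in> A2" using a A by auto
      have "\<forall>b\<in>B1. f2 (a, b) = 0" using z2 B(1) by blast
      moreover have "\<forall>b. f1 (a, b) = 0" using z1 False by blast
      ultimately have "(\<Sum>b\<in>B. f1 (a, b) + f2 (a, b)) = (\<Sum>b\<in>B2. f2 (a, b))"
        unfolding split by simp
      then show ?thesis using f2 \<open>a \<in> A2\<close> by (simp add: flow_def)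
    qed
  next
    fix b assume b: "b \<in> B"
    have split: "(\<Sum>a\<in>A. g a) = (\<Sum>a\<in>A1. g a) + (\<Sum>a\<in>A2. g a)" for g :: "nat \<Rightarrow> real"
      unfolding A(2) by (rule sum.union_disjoint) (use fin A in auto)
    show "(\<Sum>a\<in>A. f1 (a, b) + f2 (a, b)) = d b"
    proof (cases "b \<in> B1")
      case True
      then have "b \<notin> B2" using B by auto
      have "\<forall>a\<in>A2. f1 (a, b) = 0" using z1 A(1) by blast
      moreover have "\<forall>a. f2 (a, b) = 0" using z2 \<open>b \<notin> B2\<close> by blast
      ultimately have "(\<Sum>a\<in>A. f1 (a, b) + f2 (a, b)) = (\<Sum>a\<in>A1. f1 (a, b))"
        unfolding split by simp
      then show ?thesis using f1 True by (simp add: flow_def)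
    next
      case False
      then have "b \<in> B2" using b B by auto
      have "\<forall>a\<in>A1. f2 (a, b) = 0" using z2 A(1) by blast
      moreover have "\<forall>a. f1 (a, b) = 0" using z1 False by blast
      ultimately have "(\<Sum>a\<in>A. f1 (a, b) + f2 (a, b)) = (\<Sum>a\<in>A2. f2 (a, b))"
        unfolding split by simp
      then show ?thesis using f2 \<open>b \<in> B2\<close> by (simp add: flow_def)
    qed
  qed
qed



lemma sum_drop_zero:
  fixes g :: "nat \<Rightarrow> real"
  assumes "finite X" "g w = 0"
  shows "sum g X = sum g (X - {w})"
proof (cases "w \<in> X")
  case True then show ?thesis using sum.remove[OF assms(1) True, of g] assms(2) by simp
next
  case False then show ?thesis by simp
qed

lemma transport:
  fixes D :: "(nat \<times> nat) set" and s d :: "nat \<Rightarrow> real"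
  assumes "finite D" "finite A" "finite B" "D \<subseteq> A \<times> B"
    "\<forall>a\<in>A. 0 \<le> s a" "\<forall>b\<in>B. 0 \<le> d b" "sum s A = sum d B"
    "\<forall>S. S \<subseteq> A \<longrightarrow> sum s S \<le> sum d (nb D S)"
  shows "\<exists>f. flow D A B s d f"
  using assms
proof (induction "card D" arbitrary: D A B s d rule: less_induct)
  case less
  note fD = less.prems(1) and fA = less.prems(2) and fB = less.prems(3) and DAB = less.prems(4)
    and snn = less.prems(5) and dnn = less.prems(6) and bal = less.prems(7) and hall = less.prems(8)
  show ?case
  proof (cases "D = {}")
    case True
    have nbe: "nb D A = {}" using True by (simp add: nb_def)
    have "sum s A \<le> 0" using hall nbe by auto
    moreover have "0 \<le> sum s A" using snn by (simp add: sum_nonneg)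
    ultimately have sA: "sum s A = 0" by simp
    then have s0: "\<forall>a\<in>A. s a = 0" using sum_nonneg_eq_0_iff[OF fA] snn by blast
    have "sum d B = 0" using sA bal by simp
    then have d0: "\<forall>b\<in>B. d b = 0" using sum_nonneg_eq_0_iff[OF fB] dnn by blast
    have "flow D A B s d (\<lambda>_. 0)" using s0 d0 by (simp add: flow_def)
    then show ?thesis by blast
  next
    case False
    obtain u v where uv: "(u, v) \<in> D" using False by auto
    have u: "u \<in> A" and v: "v \<in> B" using uv DAB by auto
    have nbB: "nb D S \<subseteq> B" for S using nb_sub[OF DAB] .
    have fnb: "finite (nb D S)" for S using finite_subset[OF nbB fB] .
    define sl where "sl S = sum d (nb D S) - sum s S" for S
    define Fam where "Fam = {S. S \<subseteq> A - {u} \<and> v \<in> nb D S}"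
    have fFam: "finite Fam"
    proof -
      have "Fam \<subseteq> Pow A" by (auto simp: Fam_def)
      then show ?thesis using fA by (meson finite_Pow_iff finite_subset)
    qed
    define M where "M = insert (s u) (insert (d v) (sl ` Fam))"
    have fM: "finite M" using fFam by (simp add: M_def)
    define t where "t = Min M"
    have t_su: "t \<le> s u" unfolding t_def by (rule Min_le[OF fM]) (simp add: M_def)
    have t_dv: "t \<le> d v" unfolding t_def by (rule Min_le[OF fM]) (simp add: M_def)
    have t_sl: "S \<in> Fam \<Longrightarrow> t \<le> sl S" for S unfolding t_def by (rule Min_le[OF fM]) (simp add: M_def)
    have tM: "t \<in> M" unfolding t_def by (rule Min_in[OF fM]) (simp add: M_def)
    have t_nn: "0 \<le> t"
    proof -
      have "0 \<le> sl S" if "S \<in> Fam" for S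
        using hall that by (auto simp: sl_def Fam_def)
      then show ?thesis using tM snn dnn u v by (auto simp: M_def)
    qed
    define s' where "s' = s(u := s u - t)"
    define d' where "d' = d(v := d v - t)"
    have s'nn: "\<forall>a\<in>A. 0 \<le> s' a" using snn t_su by (simp add: s'_def)
    have d'nn: "\<forall>b\<in>B. 0 \<le> d' b" using dnn t_dv by (simp add: d'_def)
    have sumS: "finite S \<Longrightarrow> sum s' S = sum s S - (if u \<in> S then t else 0)" for S
      unfolding s'_def using sum_fun_upd_real[of S s u "s u - t"] by simp
    have sumD: "finite X \<Longrightarrow> sum d' X = sum d X - (if v \<in> X then t else 0)" for X
      unfolding d'_def using sum_fun_upd_real[of X d v "d v - t"] by simp
    have bal': "sum s' A = sum d' B" using sumS[OF fA] sumD[OF fB] u v bal by simp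
    have hall': "\<forall>S. S \<subseteq> A \<longrightarrow> sum s' S \<le> sum d' (nb D S)"
    proof (intro allI impI)
      fix S assume SA: "S \<subseteq> A"
      have fS: "finite S" using finite_subset[OF SA fA] .
      have h: "sum s S \<le> sum d (nb D S)" using hall SA by blast
      show "sum s' S \<le> sum d' (nb D S)"
      proof (cases "u \<in> S")
        case True
        then have "v \<in> nb D S" using uv by (auto simp: nb_def)
        then show ?thesis using sumS[OF fS] sumD[OF fnb] True h by simp
      next
        case False
        show ?thesis
        proof (cases "v \<in> nb D S")
          case True
          then have "S \<in> Fam" using SA False by (auto simp: Fam_def)
          then have "t \<le> sl S" by (rule t_sl)
          then show ?thesis using sumS[OF fS] sumD[OF fnb] True False by (simp add: sl_def)
        next
          case vF: False
          then show ?thesis using sumS[OF fS] sumD[OF fnb] False h by simp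
        qed
      qed
    qed
    have bump: "\<exists>f. flow D A B s d f" if "flow D A B s' d' f1" for f1
      using flow_bump[OF that[unfolded s'_def d'_def] uv u v t_nn fA fB] by blast
    from tM have "t = s u \<or> t = d v \<or> (\<exists>S\<in>Fam. t = sl S)" by (auto simp: M_def)
    then show ?thesis
    proof (elim disjE)
      assume ts: "t = s u"
      define D1 where "D1 = {p\<in>D. fst p \<noteq> u}"
      have "D1 \<subseteq> D" "(u, v) \<notin> D1" by (auto simp: D1_def)
      then have D1D: "D1 \<subset> D" using uv by blast
      have cD1: "card D1 < card D" by (rule psubset_card_mono[OF fD D1D])
      have fD1: "finite D1" using finite_subset[of D1 D] D1D fD by blast
      have D1AB: "D1 \<subseteq> A \<times> B" using DAB D1D by blast
      have s'u: "s' u = 0" by (simp add: s'_def ts)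
      have hall1: "\<forall>S. S \<subseteq> A \<longrightarrow> sum s' S \<le> sum d' (nb D1 S)"
      proof (intro allI impI)
        fix S assume SA: "S \<subseteq> A"
        have fS: "finite S" using finite_subset[OF SA fA] .
        have "sum s' S = sum s' (S - {u})" by (rule sum_drop_zero[of S s' u, OF fS s'u])
        also have "\<dots> \<le> sum d' (nb D (S - {u}))" using hall' SA by blast
        also have "\<dots> \<le> sum d' (nb D1 S)"
        proof (rule sum_mono2)
          show "finite (nb D1 S)" using finite_subset[OF nb_sub[OF D1AB] fB] .
          show "nb D (S - {u}) \<subseteq> nb D1 S" by (auto simp: nb_def D1_def)
          show "\<And>b. b \<in> nb D1 S - nb D (S - {u}) \<Longrightarrow> 0 \<le> d' b"
            using d'nn nb_sub[OF D1AB] by blast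
        qed
        finally show "sum s' S \<le> sum d' (nb D1 S)" .
      qed
      obtain f1 where "flow D1 A B s' d' f1"
        using less.hyps[OF cD1 fD1 fA fB D1AB s'nn d'nn bal' hall1] by blast
      then have "flow D A B s' d' f1" using flow_mono D1D by blast
      then show ?thesis by (rule bump)
    next
      assume td: "t = d v"
      define D1 where "D1 = {p\<in>D. snd p \<noteq> v}"
      have "D1 \<subseteq> D" "(u, v) \<notin> D1" by (auto simp: D1_def)
      then have D1D: "D1 \<subset> D" using uv by blast
      have cD1: "card D1 < card D" by (rule psubset_card_mono[OF fD D1D])
      have fD1: "finite D1" using finite_subset[of D1 D] D1D fD by blast
      have D1AB: "D1 \<subseteq> A \<times> B" using DAB D1D by blast
      have d'v: "d' v = 0" by (simp add: d'_def td)
      have hall1: "\<forall>S. S \<subseteq> A \<longrightarrow> sum s' S \<le> sum d' (nb D1 S)"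
      proof (intro allI impI)
        fix S assume SA: "S \<subseteq> A"
        have "sum s' S \<le> sum d' (nb D S)" using hall' SA by blast
        also have "\<dots> = sum d' (nb D S - {v})" by (rule sum_drop_zero[of "nb D S" d' v, OF fnb d'v])
        also have "nb D S - {v} = nb D1 S" by (auto simp: nb_def D1_def)
        finally show "sum s' S \<le> sum d' (nb D1 S)" .
      qed
      obtain f1 where "flow D1 A B s' d' f1"
        using less.hyps[OF cD1 fD1 fA fB D1AB s'nn d'nn bal' hall1] by blast
      then have "flow D A B s' d' f1" using flow_mono D1D by blast
      then show ?thesis by (rule bump)
    next
      assume "\<exists>S\<in>Fam. t = sl S"
      then obtain S0 where S0F: "S0 \<in> Fam" and tS0: "t = sl S0" by blast
      have S0A: "S0 \<subseteq> A" and uS0: "u \<notin> S0" and vS0: "v \<in> nb D S0" using S0F by (auto simp: Fam_def)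
      have fS0: "finite S0" using finite_subset[OF S0A fA] .
      define B1 where "B1 = nb D S0"
      define D1 where "D1 = D \<inter> (S0 \<times> B1)"
      define A2 where "A2 = A - S0"
      define B2 where "B2 = B - B1"
      define D2 where "D2 = D \<inter> (A2 \<times> B2)"
      have B1B: "B1 \<subseteq> B" by (simp add: B1_def nbB)
      have fB1: "finite B1" by (simp add: B1_def fnb)
      have fA2: "finite A2" "finite B2" using fA fB by (auto simp: A2_def B2_def)
      have tight: "sum s' S0 = sum d' B1"
        using sumS[OF fS0] sumD[OF fB1] uS0 vS0 tS0 by (simp add: sl_def B1_def)
      have "D1 \<subseteq> D" "(u, v) \<notin> D1" using uS0 by (auto simp: D1_def)
      then have D1D: "D1 \<subset> D" using uv by blast
      have cD1: "card D1 < card D" by (rule psubset_card_mono[OF fD D1D])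
      obtain a0 where a0: "a0 \<in> S0" "(a0, v) \<in> D" using vS0 by (auto simp: nb_def)
      have "D2 \<subseteq> D" "(a0, v) \<notin> D2" using a0 by (auto simp: D2_def A2_def)
      then have D2D: "D2 \<subset> D" using a0 by blast
      have cD2: "card D2 < card D" by (rule psubset_card_mono[OF fD D2D])
      have fD1: "finite D1" "finite D2" using fD by (auto simp: D1_def D2_def)
      have D1AB: "D1 \<subseteq> S0 \<times> B1" by (auto simp: D1_def)
      have D2AB: "D2 \<subseteq> A2 \<times> B2" by (auto simp: D2_def)
      have s'nn1: "\<forall>a\<in>S0. 0 \<le> s' a" using s'nn S0A by blast
      have d'nn1: "\<forall>b\<in>B1. 0 \<le> d' b" using d'nn B1B by blast
      have s'nn2: "\<forall>a\<in>A2. 0 \<le> s' a" using s'nn by (auto simp: A2_def)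
      have d'nn2: "\<forall>b\<in>B2. 0 \<le> d' b" using d'nn by (auto simp: B2_def)
      have hall1: "\<forall>S. S \<subseteq> S0 \<longrightarrow> sum s' S \<le> sum d' (nb D1 S)"
      proof (intro allI impI)
        fix S assume SS: "S \<subseteq> S0"
        have "nb D1 S = nb D S"
          using nb_mono[OF SS, of D] SS by (auto simp: nb_def D1_def B1_def)
        then show "sum s' S \<le> sum d' (nb D1 S)" using hall' SS S0A by auto
      qed
      have bal2: "sum s' A2 = sum d' B2"
      proof -
        have "sum s' A2 = sum s' A - sum s' S0" unfolding A2_def by (rule sum_diff[OF fA S0A])
        moreover have "sum d' B2 = sum d' B - sum d' B1" unfolding B2_def by (rule sum_diff[OF fB B1B])
        ultimately show ?thesis using bal' tight by simp
      qed
      have hall2: "\<forall>S. S \<subseteq> A2 \<longrightarrow> sum s' S \<le> sum d' (nb D2 S)"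
      proof (intro allI impI)
        fix S assume SA2: "S \<subseteq> A2"
        have fS: "finite S" using finite_subset[OF SA2 fA2(1)] .
        have disj: "S \<inter> S0 = {}" using SA2 by (auto simp: A2_def)
        have "sum s' S + sum s' S0 = sum s' (S \<union> S0)"
          by (rule sum.union_disjoint[symmetric]) (use fS fS0 disj in auto)
        also have "\<dots> \<le> sum d' (nb D (S \<union> S0))"
        proof -
          have "S \<union> S0 \<subseteq> A" using SA2 S0A by (auto simp: A2_def)
          then show ?thesis using hall' by blast
        qed
        also have "nb D (S \<union> S0) = (nb D S - B1) \<union> B1" by (auto simp: nb_def B1_def)
        also have "sum d' ((nb D S - B1) \<union> B1) = sum d' (nb D S - B1) + sum d' B1"
          by (rule sum.union_disjoint) (use fnb fB1 in auto)
        also have "nb D S - B1 = nb D2 S"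
          using DAB SA2 by (auto simp: nb_def D2_def B2_def A2_def)
        finally show "sum s' S \<le> sum d' (nb D2 S)" using tight by simp
      qed
      obtain f1 where f1: "flow D1 S0 B1 s' d' f1"
        using less.hyps[OF cD1 fD1(1) fS0 fB1 D1AB s'nn1 d'nn1 tight hall1] by blast
      obtain f2 where f2: "flow D2 A2 B2 s' d' f2"
        using less.hyps[OF cD2 fD1(2) fA2 D2AB s'nn2 d'nn2 bal2 hall2] by blast
      have "flow D A B s' d' (\<lambda>p. f1 p + f2 p)"
      proof (rule flow_split[OF f1 f2 D1AB D2AB])
        show "D1 \<union> D2 \<subseteq> D" by (auto simp: D1_def D2_def)
        show "S0 \<inter> A2 = {}" "A = S0 \<union> A2" using S0A by (auto simp: A2_def)
        show "B1 \<inter> B2 = {}" "B = B1 \<union> B2" using B1B by (auto simp: B2_def)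
        show "finite S0" "finite A2" "finite B1" "finite B2" using fS0 fA2 fB1 by auto
      qed
      then show ?thesis by (rule bump)
    qed
  qed
qed



lemma ii_imp_iii:
  fixes n :: nat and E :: "nat set set" and lam :: "nat \<Rightarrow> real"
  assumes n: "n \<ge> 1" and sg: "simple_graph n E" and lam: "\<forall>i\<in>{1..n}. lam i > 0"
    and ii: "\<forall>I. independent_set n E I \<longrightarrow> (\<Sum>i\<in>I. lam i) < (\<Sum>i\<in>(\<Union>k\<in>I. nbrs E k). lam i)"
  shows "\<exists>\<mu> :: nat set \<Rightarrow> real. (\<forall>e\<in>E. \<mu> e > 0) \<and>
           (\<forall>i\<in>{1..n}. (\<Sum>e\<in>E. incidence i e * \<mu> e) = lam i)"
proof -
  obtain \<delta> where dpos: "0 < \<delta>"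
    and dI: "\<And>I. independent_set n E I \<Longrightarrow> \<delta> \<le> (\<Sum>i\<in>(\<Union>k\<in>I. nbrs E k). lam i) - (\<Sum>i\<in>I. lam i)"
    using delta_exists[OF ii] by blast
  have fE: "finite E" by (rule sg_finite[OF sg])
  define deg where "deg k = (\<Sum>e\<in>E. incidence k e)" for k
  have degnn: "0 \<le> deg k" for k by (simp add: deg_def incidence_def sum_nonneg)
  define Dt where "Dt = (\<Sum>k\<in>{1..n}. deg k)"
  have degDt: "k \<in> {1..n} \<Longrightarrow> deg k \<le> Dt" for k
    unfolding Dt_def by (rule member_le_sum) (auto simp: degnn)
  have Dtnn: "0 \<le> Dt" unfolding Dt_def by (simp add: sum_nonneg degnn)
  define m where "m = Min (lam ` {1..n})"
  have mpos: "0 < m"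
  proof -
    have "m \<in> lam ` {1..n}" unfolding m_def by (rule Min_in) (use n in auto)
    then show ?thesis using lam by auto
  qed
  have mle: "k \<in> {1..n} \<Longrightarrow> m \<le> lam k" for k unfolding m_def by (rule Min_le) auto
  define \<epsilon> where "\<epsilon> = min \<delta> m / (Dt + 1)"
  have epos: "0 < \<epsilon>" using dpos mpos Dtnn by (simp add: \<epsilon>_def)
  have eDt: "\<epsilon> * Dt < min \<delta> m"
  proof -
    have "\<epsilon> * Dt = min \<delta> m * (Dt / (Dt + 1))" by (simp add: \<epsilon>_def)
    also have "\<dots> < min \<delta> m * 1"
      by (rule mult_strict_left_mono) (use dpos mpos Dtnn in auto)
    finally show ?thesis by simp
  qed
  define lam' where "lam' k = lam k - \<epsilon> * deg k" for k
  have edeg: "k \<in> {1..n} \<Longrightarrow> \<epsilon> * deg k \<le> \<epsilon> * Dt" for k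
    using degDt epos by (simp add: mult_left_mono)
  have l'nn: "k \<in> {1..n} \<Longrightarrow> 0 \<le> lam' k" for k
    using edeg[of k] eDt mle[of k] by (simp add: lam'_def)
  define VS where "VS S = (\<Union>k\<in>S. nbrs E k)" for S
  have VS1: "VS S \<subseteq> {1..n}" for S using sg_nbrs(1)[OF sg] by (auto simp: VS_def)
  have fVS: "finite (VS S)" for S using finite_subset[OF VS1] by simp
  have l'V: "b \<in> VS S \<Longrightarrow> 0 \<le> lam' b" for b S using l'nn VS1 by blast
  have weak: "sum lam' I \<le> sum lam' (VS I)" if ind: "independent_set n E I" for I
  proof -
    have I1: "I \<subseteq> {1..n}" using ind by (simp add: independent_set_def)
    have "sum lam' (VS I) - sum lam' I = (sum lam (VS I) - sum lam I) - \<epsilon> * (sum deg (VS I) - sum deg I)"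
      by (simp add: lam'_def sum_subtractf sum_distrib_left algebra_simps)
    moreover have "\<delta> \<le> sum lam (VS I) - sum lam I" using dI[OF ind] by (simp add: VS_def)
    moreover have "sum deg (VS I) \<le> Dt" unfolding Dt_def
      by (rule sum_mono2) (use VS1[of I] degnn in auto)
    moreover have "0 \<le> sum deg I" by (simp add: sum_nonneg degnn)
    ultimately have "\<delta> - \<epsilon> * Dt \<le> sum lam' (VS I) - sum lam' I"
      using epos by (smt (verit) mult_left_mono)
    then show ?thesis using eDt by linarith
  qed
  define D where "D = {p. fst p \<in> {1..n} \<and> snd p \<in> {1..n} \<and> {fst p, snd p} \<in> E}"
  have DAB: "D \<subseteq> {1..n} \<times> {1..n}" by (auto simp: D_def)
  have fD: "finite D" using finite_subset[OF DAB] by simp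
  have nbD: "nb D S = VS S" if S1: "S \<subseteq> {1..n}" for S
  proof
    show "nb D S \<subseteq> VS S" by (auto simp: nb_def D_def VS_def nbrs_def)
    show "VS S \<subseteq> nb D S"
    proof
      fix b assume "b \<in> VS S"
      then obtain a where a: "a \<in> S" "b \<in> nbrs E a" by (auto simp: VS_def)
      have "b \<in> {1..n}" by (rule sg_nbrs(1)[OF sg a(2)])
      moreover have "a \<in> {1..n}" using S1 a(1) by blast
      ultimately show "b \<in> nb D S" using a unfolding nb_def D_def nbrs_def by auto
    qed
  qed
  have hall: "\<forall>S. S \<subseteq> {1..n} \<longrightarrow> sum lam' S \<le> sum lam' (nb D S)"
  proof (intro allI impI)
    fix S assume S1: "S \<subseteq> {1..n}"
    have fS: "finite S" using finite_subset[OF S1] by simp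
    define I where "I = S - VS S"
    have split: "sum lam' S = sum lam' I + sum lam' (S \<inter> VS S)"
    proof -
      have "S = I \<union> (S \<inter> VS S)" by (auto simp: I_def)
      then have "sum lam' S = sum lam' (I \<union> (S \<inter> VS S))" by simp
      also have "\<dots> = sum lam' I + sum lam' (S \<inter> VS S)"
        by (rule sum.union_disjoint) (use fS in \<open>auto simp: I_def\<close>)
      finally show ?thesis .
    qed
    show "sum lam' S \<le> sum lam' (nb D S)"
    proof (cases "I = {}")
      case True
      then have "S \<subseteq> VS S" by (auto simp: I_def)
      then have "sum lam' S \<le> sum lam' (VS S)"
        by (intro sum_mono2 fVS) (use l'V in auto)
      then show ?thesis using nbD[OF S1] by simp
    next
      case False
      have ind: "independent_set n E I"
        unfolding independent_set_def
      proof (intro conjI ballI)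
        show "I \<noteq> {}" by (rule False)
        show "I \<subseteq> {1..n}" using S1 by (auto simp: I_def)
      next
        fix i j assume i: "i \<in> I" and j: "j \<in> I"
        show "{i, j} \<notin> E"
        proof
          assume "{i, j} \<in> E"
          then have "j \<in> nbrs E i" by (simp add: nbrs_def)
          then have "j \<in> VS S" using i by (auto simp: I_def VS_def)
          then show False using j by (simp add: I_def)
        qed
      qed
      have VIS: "VS I \<inter> S = {}"
      proof (rule ccontr)
        assume "VS I \<inter> S \<noteq> {}"
        then obtain i j where i: "i \<in> I" and j: "j \<in> nbrs E i" "j \<in> S" by (auto simp: VS_def)
        have "i \<in> nbrs E j" using j(1) nbrs_sym by metis
        then have "i \<in> VS S" using j(2) by (auto simp: VS_def)
        then show False using i by (simp add: I_def)
      qed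
      have VIVS: "VS I \<subseteq> VS S" by (auto simp: VS_def I_def)
      have "sum lam' S \<le> sum lam' (VS I) + sum lam' (S \<inter> VS S)"
        using split weak[OF ind] by simp
      also have "\<dots> = sum lam' (VS I \<union> (S \<inter> VS S))"
        by (rule sum.union_disjoint[symmetric]) (use fVS VIS in auto)
      also have "\<dots> \<le> sum lam' (VS S)"
        by (intro sum_mono2 fVS) (use l'V VIVS in auto)
      finally show ?thesis using nbD[OF S1] by simp
    qed
  qed
  obtain f where fl: "flow D {1..n} {1..n} lam' lam' f"
    using transport[OF fD _ _ DAB _ _ _ hall] l'nn by auto
  define g where "g i j = f (i, j)" for i j
  define \<mu>' where "\<mu>' e = (\<Sum>i\<in>{1..n}. \<Sum>j\<in>{1..n}. if e = {i, j} then g i j else 0) / 2" for e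
  define \<mu> where "\<mu> e = \<mu>' e + \<epsilon>" for e
  have gnn: "0 \<le> g i j" for i j using flowD(2)[OF fl] by (simp add: g_def)
  have \<mu>'nn: "0 \<le> \<mu>' e" for e by (simp add: \<mu>'_def sum_nonneg gnn)
  have key: "(\<Sum>e\<in>E. incidence k e * \<mu>' e) = lam' k" if k: "k \<in> {1..n}" for k
  proof -
    have pw: "(\<Sum>e\<in>E. if e = {i, j} then incidence k e * g i j else 0)
              = (if i = k then g i j else 0) + (if j = k then g i j else 0)" for i j
    proof (cases "g i j = 0")
      case True
      have "(\<Sum>e\<in>E. if e = {i, j} then incidence k e * g i j else 0) = 0"
        by (rule sum.neutral) (simp add: True)
      then show ?thesis unfolding True by simp
    next
      case False
      then have "(i, j) \<in> D" using flowD(1)[OF fl, of "(i, j)"] by (simp add: g_def)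
      then have ijE: "{i, j} \<in> E" by (simp add: D_def)
      have "i \<noteq> j" using ijE no_loop[OF sg, of i] by auto
      have "(\<Sum>e\<in>E. if e = {i, j} then incidence k e * g i j else 0) = incidence k {i, j} * g i j"
        using fE ijE by (simp add: sum.delta)
      then show ?thesis using \<open>i \<noteq> j\<close> by (auto simp: incidence_def)
    qed
    define h where "h e i j = (if e = {i, j} then incidence k e * g i j else 0)" for e i j
    have a1: "incidence k e * \<mu>' e = (\<Sum>i\<in>{1..n}. \<Sum>j\<in>{1..n}. h e i j) / 2" for e
    proof -
      have "incidence k e * (\<Sum>i\<in>{1..n}. \<Sum>j\<in>{1..n}. if e = {i, j} then g i j else 0)
            = (\<Sum>i\<in>{1..n}. \<Sum>j\<in>{1..n}. incidence k e * (if e = {i, j} then g i j else 0))"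
        by (simp add: sum_distrib_left)
      also have "\<dots> = (\<Sum>i\<in>{1..n}. \<Sum>j\<in>{1..n}. h e i j)"
        by (intro sum.cong refl) (simp add: h_def)
      finally show ?thesis by (simp add: \<mu>'_def)
    qed
    have "(\<Sum>e\<in>E. incidence k e * \<mu>' e) = (\<Sum>e\<in>E. \<Sum>i\<in>{1..n}. \<Sum>j\<in>{1..n}. h e i j) / 2"
      by (simp only: a1 sum_divide_distrib)
    also have "(\<Sum>e\<in>E. \<Sum>i\<in>{1..n}. \<Sum>j\<in>{1..n}. h e i j) = (\<Sum>i\<in>{1..n}. \<Sum>e\<in>E. \<Sum>j\<in>{1..n}. h e i j)"
      by (rule sum.swap)
    also have "\<dots> = (\<Sum>i\<in>{1..n}. \<Sum>j\<in>{1..n}. \<Sum>e\<in>E. h e i j)"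
      by (rule sum.cong[OF refl]) (rule sum.swap)
    also have "\<dots> = (\<Sum>i\<in>{1..n}. \<Sum>j\<in>{1..n}. (if i = k then g i j else 0) + (if j = k then g i j else 0))"
      by (intro sum.cong refl) (simp only: h_def pw)
    also have "\<dots> = (\<Sum>i\<in>{1..n}. \<Sum>j\<in>{1..n}. (if i = k then g i j else 0)) + (\<Sum>i\<in>{1..n}. \<Sum>j\<in>{1..n}. (if j = k then g i j else 0))"
      by (simp only: sum.distrib)
    also have "(\<Sum>i\<in>{1..n}. \<Sum>j\<in>{1..n}. (if i = k then g i j else 0)) = (\<Sum>j\<in>{1..n}. g k j)"
    proof -
      have "(\<Sum>i\<in>{1..n}. \<Sum>j\<in>{1..n}. (if i = k then g i j else 0)) = (\<Sum>i\<in>{1..n}. if i = k then (\<Sum>j\<in>{1..n}. g i j) else 0)"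
        by (intro sum.cong refl) simp
      also have "\<dots> = (\<Sum>j\<in>{1..n}. g k j)" using k by (simp add: sum.delta)
      finally show ?thesis .
    qed
    also have "(\<Sum>i\<in>{1..n}. \<Sum>j\<in>{1..n}. (if j = k then g i j else 0)) = (\<Sum>i\<in>{1..n}. g i k)"
    proof (rule sum.cong[OF refl])
      fix i
      show "(\<Sum>j\<in>{1..n}. (if j = k then g i j else 0)) = g i k"
        using k by (simp add: sum.delta)
    qed
    also have "(\<Sum>i\<in>{1..n}. g i k) = lam' k" using flowD(4)[OF fl k] by (simp add: g_def)
    also have "(\<Sum>j\<in>{1..n}. g k j) = lam' k" using flowD(3)[OF fl k] by (simp add: g_def)
    finally show ?thesis by simp
  qed
  show ?thesis
  proof (intro exI[of _ \<mu>] conjI ballI)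
    fix e assume "e \<in> E" then show "0 < \<mu> e" using \<mu>'nn[of e] epos by (simp add: \<mu>_def)
  next
    fix k assume k: "k \<in> {1..n}"
    have "(\<Sum>e\<in>E. incidence k e * \<mu> e) = (\<Sum>e\<in>E. incidence k e * \<mu>' e) + \<epsilon> * deg k"
      by (simp add: \<mu>_def deg_def algebra_simps sum.distrib sum_distrib_left)
    then show "(\<Sum>e\<in>E. incidence k e * \<mu> e) = lam k" using key[OF k] by (simp add: lam'_def)
  qed
qed



theorem proposition3p7:
  fixes n :: nat and E :: "nat set set" and lam :: "nat \<Rightarrow> real"
  assumes "n \<ge> 1"
    and "simple_graph n E"
    and "surjective_graph n E"
    and "\<forall>i\<in>{1..n}. lam i > 0"
  shows "(stabilizable n E lam \<longleftrightarrow>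
            (\<forall>I. independent_set n E I \<longrightarrow>
               (\<Sum>i\<in>I. lam i) < (\<Sum>i\<in>(\<Union>k\<in>I. nbrs E k). lam i)))
       \<and> ((\<forall>I. independent_set n E I \<longrightarrow>
               (\<Sum>i\<in>I. lam i) < (\<Sum>i\<in>(\<Union>k\<in>I. nbrs E k). lam i)) \<longleftrightarrow>
            (\<exists>\<mu> :: nat set \<Rightarrow> real. (\<forall>e\<in>E. \<mu> e > 0) \<and>
               (\<forall>i\<in>{1..n}. (\<Sum>e\<in>E. incidence i e * \<mu> e) = lam i)))"
proof (intro conjI iffI)
  assume st: "stabilizable n E lam"
  then obtain sz s0 Phi where mp: "matching_policy n E sz s0 Phi"
    and pr: "positive_recurrent (policy_chain n lam Phi)"
    unfolding stabilizable_def by blast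
  show "\<forall>I. independent_set n E I \<longrightarrow> (\<Sum>i\<in>I. lam i) < (\<Sum>i\<in>(\<Union>k\<in>I. nbrs E k). lam i)"
  proof (intro allI impI)
    fix I assume ind: "independent_set n E I"
    show "(\<Sum>i\<in>I. lam i) < (\<Sum>i\<in>(\<Union>k\<in>I. nbrs E k). lam i)"
    proof (rule ccontr)
      assume "\<not> ?thesis"
      then have "(\<Sum>i\<in>(\<Union>k\<in>I. nbrs E k). lam i) \<le> (\<Sum>i\<in>I. lam i)" by simp
      then show False by (rule necessity[OF assms(2) assms(4) mp pr ind])
    qed
  qed
next
  assume ii: "\<forall>I. independent_set n E I \<longrightarrow> (\<Sum>i\<in>I. lam i) < (\<Sum>i\<in>(\<Union>k\<in>I. nbrs E k). lam i)"
  show "stabilizable n E lam" by (rule sufficiency[OF assms ii])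
next
  assume ii: "\<forall>I. independent_set n E I \<longrightarrow> (\<Sum>i\<in>I. lam i) < (\<Sum>i\<in>(\<Union>k\<in>I. nbrs E k). lam i)"
  show "\<exists>\<mu> :: nat set \<Rightarrow> real. (\<forall>e\<in>E. \<mu> e > 0) \<and> (\<forall>i\<in>{1..n}. (\<Sum>e\<in>E. incidence i e * \<mu> e) = lam i)"
    by (rule ii_imp_iii[OF assms(1) assms(2) assms(4) ii])
next
  assume "\<exists>\<mu> :: nat set \<Rightarrow> real. (\<forall>e\<in>E. \<mu> e > 0) \<and> (\<forall>i\<in>{1..n}. (\<Sum>e\<in>E. incidence i e * \<mu> e) = lam i)"
  then obtain \<mu> :: "nat set \<Rightarrow> real" where mupos: "\<forall>e\<in>E. \<mu> e > 0"
    and mu: "\<forall>i\<in>{1..n}. (\<Sum>e\<in>E. incidence i e * \<mu> e) = lam i" by blast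
  show "\<forall>I. independent_set n E I \<longrightarrow> (\<Sum>i\<in>I. lam i) < (\<Sum>i\<in>(\<Union>k\<in>I. nbrs E k). lam i)"
    using iii_imp_ii[OF assms(2) assms(3) mupos mu] by blast
qed

end
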